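(* Let $\alpha>0$ and $\beta\ge 0$ satisfy $2\alpha\tanh\beta<1$. Consider the dilute mean field ferromagnet on $N$ spins with connectivity $\alpha$ at inverse temperature $\beta$ (defined in the context). Then for every integer $n\ge 2$, $$\langle q^{2}_{1\cdots n}\rangle=\mathbb{E}\,\Omega^{n}(\sigma_{i_{0}}\sigma_{j_{0}})\le \mathbb{E}\,\Omega(\sigma_{i_{0}}\sigma_{j_{0}})=\langle m^{2}\rangle = O(1/N),$$ where $O(1/N)$ means that $\sup_{N} N\langle m^2\rangle<\infty$ (for fixed $\alpha,\beta$).
   Context: Spin configurations are $\sigma=(\sigma_1,\dots,\sigma_N)\in\{-1,+1\}^N$. Let $\{i_\nu,j_\nu\}_{\nu\ge 1}$ be independent random variables, each uniformly distributed on $\{1,\dots,N\}$, and let $K$ be an independent Poisson random variable with mean $\alpha N$. The random Hamiltonian is $H_N(\sigma)=-\sum_{\nu=1}^{K}\sigma_{i_\nu}\sigma_{j_\nu}$. The partition function is $Z_N=\sum_\sigma e^{-\beta H_N(\sigma)}$ and the (random) Boltzmann–Gibbs expectation of an observable $\mathcal O$ is $\Omega(\mathcal O)=Z_N^{-1}\sum_\sigma e^{-\beta H_N(\sigma)}\mathcal O(\sigma)$; for observables depending on several configurations (replicas) $\sigma^{(1)},\dots,\sigma^{(n)}$, $\Omega$ denotes the product measure over independent replicas with the same Hamiltonian. $\mathbb{E}$ denotes expectation over all the randomness ($K$ and the $i_\nu,j_\nu$), and $\langle\cdot\rangle=\mathbb{E}\,\Omega(\cdot)$. The magnetization is $m(\sigma)=\frac1N\sum_{i=1}^N\sigma_i$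 and the overlap of $n$ replicas is $q_{1\cdots n}=\frac1N\sum_{i=1}^N\sigma^{(1)}_i\cdots\sigma^{(n)}_i$. The indices $i_0,j_0$ are independent, uniformly distributed on $\{1,\dots,N\}$ and independent of all random variables entering $\Omega$. *)

theory Defs
  imports "HOL-Probability.Probability"
begin

text \<open>Sites are indexed by 0..N-1 (instead of 1..N). A disorder realization is the list of edges
  [(i_1,j_1),...,(i_K,j_K)].\<close>

definition configs :: "nat \<Rightarrow> (nat \<Rightarrow> real) set" where
  "configs N = PiE {..<N} (\<lambda>_. {-1, 1})"

definition hamiltonian :: "(nat \<times> nat) list \<Rightarrow> (nat \<Rightarrow> real) \<Rightarrow> real" where
  "hamiltonian es \<sigma> = - (\<Sum>e\<leftarrow>es. \<sigma> (fst e) * \<sigma> (snd e))"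

definition boltz :: "real \<Rightarrow> (nat \<times> nat) list \<Rightarrow> (nat \<Rightarrow> real) \<Rightarrow> real" where
  "boltz \<beta> es \<sigma> = exp (- \<beta> * hamiltonian es \<sigma>)"

definition partition_fn :: "nat \<Rightarrow> real \<Rightarrow> (nat \<times> nat) list \<Rightarrow> real" where
  "partition_fn N \<beta> es = (\<Sum>\<sigma>\<in>configs N. boltz \<beta> es \<sigma>)"

definition gibbs :: "nat \<Rightarrow> real \<Rightarrow> (nat \<times> nat) list \<Rightarrow> ((nat \<Rightarrow> real) \<Rightarrow> real) \<Rightarrow> real" where
  "gibbs N \<beta> es obs = (\<Sum>\<sigma>\<in>configs N. boltz \<beta> es \<sigma> * obs \<sigma>) / partition_fn N \<beta> es"

definition gibbs_rep :: "nat \<Rightarrow> real \<Rightarrow> (nat \<times> nat) list \<Rightarrow> nat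
    \<Rightarrow> ((nat \<Rightarrow> nat \<Rightarrow> real) \<Rightarrow> real) \<Rightarrow> real" where
  "gibbs_rep N \<beta> es n obs =
     (\<Sum>\<tau>\<in>PiE {..<n} (\<lambda>_. configs N). (\<Prod>a<n. boltz \<beta> es (\<tau> a)) * obs \<tau>)
       / partition_fn N \<beta> es ^ n"

definition magnetization :: "nat \<Rightarrow> (nat \<Rightarrow> real) \<Rightarrow> real" where
  "magnetization N \<sigma> = (\<Sum>i<N. \<sigma> i) / real N"

definition overlap :: "nat \<Rightarrow> nat \<Rightarrow> (nat \<Rightarrow> nat \<Rightarrow> real) \<Rightarrow> real" where
  "overlap N n \<tau> = (\<Sum>i<N. \<Prod>a<n. \<tau> a i) / real N"

definition site_pair_pmf :: "nat \<Rightarrow> (nat \<times> nat) pmf" where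
  "site_pair_pmf N = pmf_of_set ({..<N} \<times> {..<N})"

definition disorder :: "real \<Rightarrow> nat \<Rightarrow> (nat \<times> nat) list pmf" where
  "disorder \<alpha> N = bind_pmf (poisson_pmf (\<alpha> * real N)) (\<lambda>K. replicate_pmf K (site_pair_pmf N))"

definition Edis :: "real \<Rightarrow> nat \<Rightarrow> ((nat \<times> nat) list \<Rightarrow> real) \<Rightarrow> real" where
  "Edis \<alpha> N F = measure_pmf.expectation (disorder \<alpha> N) F"

definition Edis_sites :: "real \<Rightarrow> nat \<Rightarrow> ((nat \<times> nat) list \<Rightarrow> nat \<Rightarrow> nat \<Rightarrow> real) \<Rightarrow> real" where
  "Edis_sites \<alpha> N F =
     measure_pmf.expectation (pair_pmf (disorder \<alpha> N) (site_pair_pmf N))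
       (\<lambda>(es, (i0, j0)). F es i0 j0)"

end

theory Submission
  imports Defs
begin

definition inr :: "nat \<Rightarrow> (nat \<times> nat) list \<Rightarrow> bool" where
  "inr N es \<longleftrightarrow> (\<forall>e\<in>set es. fst e < N \<and> snd e < N)"

lemma configs_iff:
  "\<sigma> \<in> configs N \<longleftrightarrow> (\<forall>v<N. \<sigma> v = -1 \<or> \<sigma> v = 1) \<and> (\<forall>v. N \<le> v \<longrightarrow> \<sigma> v = undefined)"
  by (auto simp: configs_def PiE_iff extensional_def)

lemma finite_configs: "finite (configs N)"
  by (simp add: configs_def finite_PiE)

lemma one_config: "(\<lambda>v. if v < N then 1 else undefined) \<in> configs N"
  by (auto simp: configs_iff)

lemma configs_ne: "configs N \<noteq> {}"
  using one_config by blast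

lemma spin_pm: "\<sigma> \<in> configs N \<Longrightarrow> v < N \<Longrightarrow> \<sigma> v = -1 \<or> \<sigma> v = 1"
  by (auto simp: configs_iff)

lemma spin_sq: "\<sigma> \<in> configs N \<Longrightarrow> v < N \<Longrightarrow> \<sigma> v * \<sigma> v = 1"
  using spin_pm[of \<sigma> N v] by auto

lemma spin_abs: "\<sigma> \<in> configs N \<Longrightarrow> v < N \<Longrightarrow> \<bar>\<sigma> v\<bar> = 1"
  using spin_pm by fastforce

definition cm :: "nat \<Rightarrow> (nat \<Rightarrow> real) \<Rightarrow> (nat \<Rightarrow> real) \<Rightarrow> nat \<Rightarrow> real" where
  "cm N \<sigma> \<rho> = (\<lambda>v. if v < N then \<sigma> v * \<rho> v else undefined)"

lemma cm_configs: "\<sigma> \<in> configs N \<Longrightarrow> \<rho> \<in> configs N \<Longrightarrow> cm N \<sigma> \<rho> \<in> configs N"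
proof -
  assume a: "\<sigma> \<in> configs N" "\<rho> \<in> configs N"
  have "\<sigma> v * \<rho> v = -1 \<or> \<sigma> v * \<rho> v = 1" if "v < N" for v
    using spin_pm[OF a(1) that] spin_pm[OF a(2) that] by auto
  then show ?thesis by (auto simp: configs_iff cm_def)
qed

lemma cm_cm: "\<sigma> \<in> configs N \<Longrightarrow> \<rho> \<in> configs N \<Longrightarrow> cm N (cm N \<sigma> \<rho>) \<rho> = \<sigma>"
  unfolding cm_def
proof (rule ext)
  fix v assume a: "\<sigma> \<in> configs N" "\<rho> \<in> configs N"
  show "(if v < N then (if v < N then \<sigma> v * \<rho> v else undefined) * \<rho> v else undefined) = \<sigma> v"
  proof (cases "v < N")
    case True
    then show ?thesis using spin_sq[OF a(2) True] by (simp add: mult.assoc)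
  next
    case False
    then show ?thesis using a(1) by (simp add: configs_iff)
  qed
qed

definition chr :: "nat \<Rightarrow> ((nat \<Rightarrow> real) \<Rightarrow> real) \<Rightarrow> bool" where
  "chr N f \<longleftrightarrow> (\<forall>\<sigma>\<in>configs N. f \<sigma> = -1 \<or> f \<sigma> = 1) \<and>
      (\<forall>\<sigma>\<in>configs N. \<forall>\<rho>\<in>configs N. f (cm N \<sigma> \<rho>) = f \<sigma> * f \<rho>)"

lemma chr_site: "v < N \<Longrightarrow> chr N (\<lambda>\<sigma>. \<sigma> v)"
  unfolding chr_def using spin_pm[of _ N v] by (simp add: cm_def)

lemma chr_one: "chr N (\<lambda>\<sigma>. 1)"
  unfolding chr_def by auto

lemma chr_mult: "chr N f \<Longrightarrow> chr N g \<Longrightarrow> chr N (\<lambda>\<sigma>. f \<sigma> * g \<sigma>)"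
proof -
  assume f: "chr N f" and g: "chr N g"
  have "f \<sigma> * g \<sigma> = -1 \<or> f \<sigma> * g \<sigma> = 1" if "\<sigma> \<in> configs N" for \<sigma>
    proof -
    have "f \<sigma> = -1 \<or> f \<sigma> = 1" "g \<sigma> = -1 \<or> g \<sigma> = 1" using f g that unfolding chr_def by blast+
    then show ?thesis by auto
  qed
  moreover have "f (cm N \<sigma> \<rho>) * g (cm N \<sigma> \<rho>) = (f \<sigma> * g \<sigma>) * (f \<rho> * g \<rho>)"
    if "\<sigma> \<in> configs N" "\<rho> \<in> configs N" for \<sigma> \<rho>
    using f g that unfolding chr_def by (simp add: mult_ac)
  ultimately show ?thesis unfolding chr_def by blast
qed

lemma chr_prod: "finite S \<Longrightarrow> (\<And>x. x \<in> S \<Longrightarrow> chr N (f x)) \<Longrightarrow> chr N (\<lambda>\<sigma>. \<Prod>x\<in>S. f x \<sigma>)"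
proof (induction S rule: finite_induct)
  case empty then show ?case by (simp add: chr_one)
next
  case (insert x F)
  then show ?case by (simp add: chr_mult)
qed

lemma char_sum:
  assumes "chr N f"
  shows "(\<Sum>\<sigma>\<in>configs N. f \<sigma>) = (if \<forall>\<sigma>\<in>configs N. f \<sigma> = 1 then real (card (configs N)) else 0)"
proof (cases "\<forall>\<sigma>\<in>configs N. f \<sigma> = 1")
  case True
  then show ?thesis by simp
next
  case False
  then obtain \<rho> where r: "\<rho> \<in> configs N" "f \<rho> \<noteq> 1" by blast
  then have fr: "f \<rho> = -1" using assms unfolding chr_def by blast
  have "(\<Sum>\<sigma>\<in>configs N. f \<sigma>) = (\<Sum>\<sigma>\<in>configs N. f (cm N \<sigma> \<rho>))"
    by (rule sum.reindex_bij_witness[of _ "\<lambda>\<sigma>. cm N \<sigma> \<rho>" "\<lambda>\<sigma>. cm N \<sigma> \<rho>"])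
       (auto simp: cm_cm cm_configs r)
  also have "\<dots> = (\<Sum>\<sigma>\<in>configs N. - f \<sigma>)"
    using assms r fr unfolding chr_def by (intro sum.cong) auto
  finally have "(\<Sum>\<sigma>\<in>configs N. f \<sigma>) = 0" by (simp add: sum_negf)
  then show ?thesis using False by auto
qed

lemma char_sum_nonneg: "chr N f \<Longrightarrow> 0 \<le> (\<Sum>\<sigma>\<in>configs N. f \<sigma>)"
  by (simp add: char_sum)


definition xv :: "(nat \<times> nat) list \<Rightarrow> nat \<Rightarrow> (nat \<Rightarrow> real) \<Rightarrow> real" where
  "xv es \<nu> \<sigma> = \<sigma> (fst (es ! \<nu>)) * \<sigma> (snd (es ! \<nu>))"

definition monom :: "(nat \<times> nat) list \<Rightarrow> nat set \<Rightarrow> (nat \<Rightarrow> real) \<Rightarrow> real" where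
  "monom es S \<sigma> = (\<Prod>\<nu>\<in>S. xv es \<nu> \<sigma>)"

definition Pw :: "real \<Rightarrow> (nat \<times> nat) list \<Rightarrow> (nat \<Rightarrow> real) \<Rightarrow> real" where
  "Pw t es \<sigma> = (\<Prod>\<nu><length es. 1 + t * xv es \<nu> \<sigma>)"

definition Nt :: "nat \<Rightarrow> real \<Rightarrow> (nat \<times> nat) list \<Rightarrow> ((nat \<Rightarrow> real) \<Rightarrow> real) \<Rightarrow> real" where
  "Nt N t es f = (\<Sum>\<sigma>\<in>configs N. Pw t es \<sigma> * f \<sigma>)"

lemma inrD: "inr N es \<Longrightarrow> \<nu> < length es \<Longrightarrow> fst (es ! \<nu>) < N \<and> snd (es ! \<nu>) < N"
  unfolding inr_def using nth_mem by blast

lemma chr_xv: "inr N es \<Longrightarrow> \<nu> < length es \<Longrightarrow> chr N (xv es \<nu>)"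
  unfolding xv_def by (drule inrD) (auto intro!: chr_mult chr_site)

lemma chr_monom: "inr N es \<Longrightarrow> S \<subseteq> {..<length es} \<Longrightarrow> chr N (monom es S)"
  unfolding monom_def
  by (rule chr_prod) (auto intro: chr_xv finite_subset[of S "{..<length es}"])

lemma xv_pm: "inr N es \<Longrightarrow> \<nu> < length es \<Longrightarrow> \<sigma> \<in> configs N \<Longrightarrow> xv es \<nu> \<sigma> = -1 \<or> xv es \<nu> \<sigma> = 1"
  using chr_xv unfolding chr_def by blast

lemma exp_pm:
  fixes \<beta> x :: real
  assumes "x = -1 \<or> x = 1"
  shows "exp (\<beta> * x) = cosh \<beta> * (1 + tanh \<beta> * x)"
proof -
  have c: "cosh \<beta> > 0" by simp
  have e: "cosh \<beta> * (1 + tanh \<beta> * x) = cosh \<beta> + sinh \<beta> * x"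
    using c unfolding tanh_def by (simp add: distrib_left)
  from assms show ?thesis
  proof
    assume "x = -1"
    then show ?thesis using e cosh_minus_sinh[of \<beta>] by simp
  next
    assume "x = 1"
    then show ?thesis using e cosh_plus_sinh[of \<beta>] by simp
  qed
qed

lemma boltz_eq:
  assumes "inr N es" "\<sigma> \<in> configs N"
  shows "boltz \<beta> es \<sigma> = cosh \<beta> ^ length es * Pw (tanh \<beta>) es \<sigma>"
proof -
  have "hamiltonian es \<sigma> = - (\<Sum>\<nu><length es. xv es \<nu> \<sigma>)"
    unfolding hamiltonian_def xv_def
    by (simp add: sum_list_sum_nth atLeast0LessThan)
  then have "boltz \<beta> es \<sigma> = exp (\<Sum>\<nu><length es. \<beta> * xv es \<nu> \<sigma>)"
    unfolding boltz_def by (simp add: sum_distrib_left sum_negf)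
  also have "\<dots> = (\<Prod>\<nu><length es. exp (\<beta> * xv es \<nu> \<sigma>))"
    by (simp add: exp_sum)
  also have "\<dots> = (\<Prod>\<nu><length es. cosh \<beta> * (1 + tanh \<beta> * xv es \<nu> \<sigma>))"
    using xv_pm[OF assms(1) _ assms(2)] exp_pm by (intro prod.cong) auto
  also have "\<dots> = cosh \<beta> ^ length es * Pw (tanh \<beta>) es \<sigma>"
    unfolding Pw_def by (simp add: prod.distrib)
  finally show ?thesis .
qed

lemma partition_pos: "partition_fn N \<beta> es > 0"
  unfolding partition_fn_def boltz_def
  by (rule sum_pos) (auto simp: finite_configs configs_ne)

lemma gibbs_Nt:
  assumes "inr N es"
  shows "gibbs N \<beta> es f = Nt N (tanh \<beta>) es f / Nt N (tanh \<beta>) es (\<lambda>_. 1)"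
proof -
  have c: "cosh \<beta> ^ length es > 0" by simp
  have "(\<Sum>\<sigma>\<in>configs N. boltz \<beta> es \<sigma> * f \<sigma>) = cosh \<beta> ^ length es * Nt N (tanh \<beta>) es f"
    unfolding Nt_def using boltz_eq[OF assms] by (simp add: sum_distrib_left mult.assoc)
  moreover have "partition_fn N \<beta> es = cosh \<beta> ^ length es * Nt N (tanh \<beta>) es (\<lambda>_. 1)"
    unfolding Nt_def partition_fn_def using boltz_eq[OF assms] by (simp add: sum_distrib_left)
  ultimately show ?thesis unfolding gibbs_def using c by simp
qed

lemma Pw_expand:
  "Pw t es \<sigma> = (\<Sum>S\<in>Pow {..<length es}. t ^ card S * monom es S \<sigma>)"
proof -
  have "Pw t es \<sigma> = (\<Prod>\<nu><length es. t * xv es \<nu> \<sigma> + 1)"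
    unfolding Pw_def by (simp add: add.commute)
  also have "\<dots> = (\<Sum>S\<in>Pow {..<length es}. (\<Prod>\<nu>\<in>S. t * xv es \<nu> \<sigma>) * (\<Prod>\<nu>\<in>{..<length es} - S. 1))"
    by (rule prod_add) simp
  also have "\<dots> = (\<Sum>S\<in>Pow {..<length es}. t ^ card S * monom es S \<sigma>)"
    unfolding monom_def by (intro sum.cong refl) (simp add: prod.distrib)
  finally show ?thesis .
qed

lemma Nt_expand:
  "Nt N t es f = (\<Sum>S\<in>Pow {..<length es}. t ^ card S * (\<Sum>\<sigma>\<in>configs N. monom es S \<sigma> * f \<sigma>))"
proof -
  have "Nt N t es f = (\<Sum>\<sigma>\<in>configs N. \<Sum>S\<in>Pow {..<length es}. t ^ card S * (monom es S \<sigma> * f \<sigma>))"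
    unfolding Nt_def Pw_expand by (simp add: sum_distrib_right mult.assoc)
  also have "\<dots> = (\<Sum>S\<in>Pow {..<length es}. \<Sum>\<sigma>\<in>configs N. t ^ card S * (monom es S \<sigma> * f \<sigma>))"
    by (rule sum.swap)
  also have "\<dots> = (\<Sum>S\<in>Pow {..<length es}. t ^ card S * (\<Sum>\<sigma>\<in>configs N. monom es S \<sigma> * f \<sigma>))"
    by (simp add: sum_distrib_left)
  finally show ?thesis .
qed

lemma Nt_nonneg_chr:
  assumes "inr N es" "0 \<le> t" "chr N f"
  shows "0 \<le> Nt N t es f"
  unfolding Nt_expand
  by (intro sum_nonneg mult_nonneg_nonneg zero_le_power assms(2) char_sum_nonneg chr_mult chr_monom[OF assms(1)] assms(3)) auto

lemma Nt_one_pos: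
  assumes "inr N es"
  shows "Nt N (tanh \<beta>) es (\<lambda>_. 1) > 0"
proof -
  have "partition_fn N \<beta> es = cosh \<beta> ^ length es * Nt N (tanh \<beta>) es (\<lambda>_. 1)"
    unfolding Nt_def partition_fn_def using boltz_eq[OF assms] by (simp add: sum_distrib_left)
  with partition_pos[of N \<beta> es] show ?thesis
    by (metis cosh_real_pos zero_less_mult_pos zero_less_power)
qed

lemma gibbs_corr_nonneg:
  assumes "inr N es" "0 \<le> \<beta>" "i < N" "j < N"
  shows "0 \<le> gibbs N \<beta> es (\<lambda>\<sigma>. \<sigma> i * \<sigma> j)"
  unfolding gibbs_Nt[OF assms(1)]
  using Nt_one_pos[OF assms(1), of \<beta>] assms
  by (intro divide_nonneg_pos Nt_nonneg_chr chr_mult chr_site) (auto simp: tanh_real_nonneg_iff)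

lemma gibbs_le_one:
  assumes "\<And>\<sigma>. \<sigma> \<in> configs N \<Longrightarrow> f \<sigma> \<le> 1"
  shows "gibbs N \<beta> es f \<le> 1"
proof -
  have "(\<Sum>\<sigma>\<in>configs N. boltz \<beta> es \<sigma> * f \<sigma>) \<le> (\<Sum>\<sigma>\<in>configs N. boltz \<beta> es \<sigma>)"
    using assms by (intro sum_mono) (simp add: boltz_def)
  then show ?thesis using partition_pos[of N \<beta> es]
    unfolding gibbs_def partition_fn_def by simp
qed

lemma gibbs_nonneg:
  assumes "\<And>\<sigma>. \<sigma> \<in> configs N \<Longrightarrow> 0 \<le> f \<sigma>"
  shows "0 \<le> gibbs N \<beta> es f"
  unfolding gibbs_def using partition_pos[of N \<beta> es] assms
  by (intro divide_nonneg_pos sum_nonneg) (auto simp: boltz_def)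

lemma gibbs_sum:
  assumes "finite I"
  shows "gibbs N \<beta> es (\<lambda>\<sigma>. \<Sum>x\<in>I. f x \<sigma>) = (\<Sum>x\<in>I. gibbs N \<beta> es (f x))"
proof -
  have "(\<Sum>\<sigma>\<in>configs N. boltz \<beta> es \<sigma> * (\<Sum>x\<in>I. f x \<sigma>)) = (\<Sum>\<sigma>\<in>configs N. \<Sum>x\<in>I. boltz \<beta> es \<sigma> * f x \<sigma>)"
    by (simp add: sum_distrib_left)
  also have "\<dots> = (\<Sum>x\<in>I. \<Sum>\<sigma>\<in>configs N. boltz \<beta> es \<sigma> * f x \<sigma>)"
    by (rule sum.swap)
  finally show ?thesis unfolding gibbs_def by (simp add: sum_divide_distrib)
qed

lemma gibbs_cmult:
  "gibbs N \<beta> es (\<lambda>\<sigma>. c * f \<sigma>) = c * gibbs N \<beta> es f"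
  unfolding gibbs_def by (simp add: sum_distrib_left mult_ac)


definition pats :: "nat \<Rightarrow> nat list \<Rightarrow> (nat \<times> nat) set list" where
  "pats i vs = map (\<lambda>m. {((i#vs)!m, vs!m), (vs!m, (i#vs)!m)}) [0..<length vs]"

definition Aset :: "(nat \<times> nat) list \<Rightarrow> (nat \<times> nat) set list \<Rightarrow> nat list set" where
  "Aset es gs = {ns. length ns = length gs \<and> distinct ns \<and>
      (\<forall>k<length gs. ns!k < length es \<and> es!(ns!k) \<in> gs!k)}"

lemma length_pats[simp]: "length (pats i vs) = length vs"
  by (simp add: pats_def)

lemma pats_Cons_0[simp]: "pats i (v#vs) ! 0 = {(i,v),(v,i)}"
  unfolding pats_def by (simp del: upt_Suc)

lemma pats_Cons_Suc[simp]: "m < length vs \<Longrightarrow> pats i (v#vs) ! Suc m = pats v vs ! m"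
  by (simp add: pats_def del: upt_Suc)

lemma Aset_Nil_pats: "ns \<in> Aset es (pats i []) \<longleftrightarrow> ns = []"
  by (auto simp: Aset_def)

lemma Aset_Cons_pats:
  "n # ns \<in> Aset es (pats i (v#vs)) \<longleftrightarrow>
     n < length es \<and> es!n \<in> {(i,v),(v,i)} \<and> n \<notin> set ns \<and> ns \<in> Aset es (pats v vs)"
  unfolding Aset_def by (auto simp: All_less_Suc2)

lemma Aset_pats_Cons_shape:
  "ns \<in> Aset es (pats i (v#vs)) \<Longrightarrow> \<exists>n ns'. ns = n # ns'"
  by (cases ns) (auto simp: Aset_def)

lemma finite_Aset: "finite (Aset es gs)"
proof -
  have "Aset es gs \<subseteq> {ns. set ns \<subseteq> {..<length es} \<and> length ns = length gs}"
    by (auto simp: Aset_def in_set_conv_nth)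
  then show ?thesis by (rule finite_subset) (simp add: finite_lists_length_eq)
qed

lemma Aset_pats_props:
  assumes "inr N es" "i < N" "ns \<in> Aset es (pats i vs)"
  shows "set vs \<subseteq> {..<N} \<and> last (i#vs) < N \<and> length vs = length ns \<and> set ns \<subseteq> {..<length es}"
  using assms(2,3)
proof (induction vs arbitrary: i ns)
  case Nil
  then show ?case by (simp add: Aset_Nil_pats)
next
  case (Cons v vs)
  obtain n ns' where ns: "ns = n # ns'" using Aset_pats_Cons_shape[OF Cons.prems(2)] by blast
  have h: "n < length es" "es!n \<in> {(i,v),(v,i)}" "n \<notin> set ns'" "ns' \<in> Aset es (pats v vs)"
    using Cons.prems(2) unfolding ns Aset_Cons_pats by auto
  have "v < N" using inrD[OF assms(1) h(1)] h(2) by auto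
  from Cons.IH[OF this h(4)] h(1) \<open>v < N\<close> show ?case by (simp add: ns)
qed

lemma Aset_length_le:
  assumes "ns \<in> Aset es gs" shows "length ns \<le> length es"
proof -
  have "set ns \<subseteq> {..<length es}" using assms by (auto simp: Aset_def in_set_conv_nth)
  then have "card (set ns) \<le> length es" by (metis card_lessThan card_mono finite_lessThan)
  moreover have "distinct ns" using assms by (simp add: Aset_def)
  ultimately show ?thesis by (simp add: distinct_card)
qed

lemma trail_prod:
  assumes "inr N es" "\<sigma> \<in> configs N" "i < N" "ns \<in> Aset es (pats i vs)"
  shows "monom es (set ns) \<sigma> = \<sigma> i * \<sigma> (last (i#vs))"
  using assms(3,4)
proof (induction vs arbitrary: i ns)
  case Nil
  then show ?case by (simp add: Aset_Nil_pats monom_def spin_sq[OF assms(2)])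
next
  case (Cons v vs)
  obtain n ns' where ns: "ns = n # ns'" using Aset_pats_Cons_shape[OF Cons.prems(2)] by blast
  have h: "n < length es" "es!n \<in> {(i,v),(v,i)}" "n \<notin> set ns'" "ns' \<in> Aset es (pats v vs)"
    using Cons.prems(2) unfolding ns Aset_Cons_pats by auto
  have v: "v < N" using inrD[OF assms(1) h(1)] h(2) by auto
  have x: "xv es n \<sigma> = \<sigma> i * \<sigma> v" using h(2) unfolding xv_def by (auto simp: mult.commute)
  have "monom es (set ns) \<sigma> = xv es n \<sigma> * monom es (set ns') \<sigma>"
    unfolding ns monom_def using h(3) by simp
  also have "\<dots> = \<sigma> i * (\<sigma> v * \<sigma> v) * \<sigma> (last (v#vs))"
    using Cons.IH[OF v h(4)] x by (simp add: mult_ac)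
  also have "\<dots> = \<sigma> i * \<sigma> (last (i#v#vs))"
    using spin_sq[OF assms(2) v] by simp
  finally show ?case .
qed

lemma trail_exists:
  assumes "inr N es" "finite S" "S \<subseteq> {..<length es}" "i < N" "j < N"
    "\<forall>\<sigma>\<in>configs N. monom es S \<sigma> * (\<sigma> i * \<sigma> j) = 1"
  shows "\<exists>vs ns. ns \<in> Aset es (pats i vs) \<and> set ns \<subseteq> S \<and> last (i#vs) = j"
  using assms(2-)
proof (induction "card S" arbitrary: S i rule: less_induct)
  case less
  show ?case
  proof (cases "i = j")
    case True
    then show ?thesis by (intro exI[of _ "[]"]) (simp add: Aset_Nil_pats)
  next
    case False
    have "\<exists>\<nu>\<in>S. fst (es!\<nu>) = i \<or> snd (es!\<nu>) = i"
    proof (rule ccontr)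
      assume no: "\<not> ?thesis"
      define \<rho> where "\<rho> = (\<lambda>v. if v < N then (if v = i then -1 else 1) else (undefined::real))"
      have r: "\<rho> \<in> configs N" unfolding \<rho>_def configs_iff by auto
      have "monom es S \<rho> = 1"
        unfolding monom_def
      proof (rule prod.neutral, intro ballI)
        fix \<nu> assume "\<nu> \<in> S"
        then have "\<nu> < length es" using less.prems(2) by auto
        then show "xv es \<nu> \<rho> = 1"
          using inrD[OF assms(1)] no \<open>\<nu> \<in> S\<close> unfolding xv_def \<rho>_def by auto
      qed
      moreover have "\<rho> i * \<rho> j = -1" using False less.prems(3,4) unfolding \<rho>_def by auto
      ultimately show False using less.prems(5) r by force
    qed
    then obtain \<nu> where nu: "\<nu> \<in> S" "fst (es!\<nu>) = i \<or> snd (es!\<nu>) = i" by blast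
    define k where "k = (if fst (es!\<nu>) = i then snd (es!\<nu>) else fst (es!\<nu>))"
    have nuK: "\<nu> < length es" using nu less.prems(2) by auto
    have ek: "es!\<nu> \<in> {(i,k),(k,i)}" using nu(2) unfolding k_def by (cases "es!\<nu>") auto
    have kN: "k < N" using inrD[OF assms(1) nuK] unfolding k_def by auto
    define S' where "S' = S - {\<nu>}"
    have cS: "card S' < card S" unfolding S'_def by (rule card_Diff1_less[OF less.prems(1) nu(1)])
    have cond: "\<forall>\<sigma>\<in>configs N. monom es S' \<sigma> * (\<sigma> k * \<sigma> j) = 1"
    proof
      fix \<sigma> assume s: "\<sigma> \<in> configs N"
      have x: "xv es \<nu> \<sigma> = \<sigma> i * \<sigma> k" using ek unfolding xv_def by (auto simp: mult.commute)
      have m: "monom es S \<sigma> = xv es \<nu> \<sigma> * monom es S' \<sigma>"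
        unfolding monom_def S'_def using less.prems(1) nu(1) by (simp add: prod.remove)
      have "monom es S' \<sigma> * (\<sigma> k * \<sigma> j) = monom es S' \<sigma> * (\<sigma> k * \<sigma> j) * (\<sigma> i * \<sigma> i)"
        using spin_sq[OF s less.prems(3)] by simp
      also have "\<dots> = monom es S \<sigma> * (\<sigma> i * \<sigma> j)" using m x by (simp add: mult_ac)
      also have "\<dots> = 1" using less.prems(5) s by blast
      finally show "monom es S' \<sigma> * (\<sigma> k * \<sigma> j) = 1" .
    qed
    obtain vs ns where IH: "ns \<in> Aset es (pats k vs)" "set ns \<subseteq> S'" "last (k#vs) = j"
      using less.hyps[OF cS _ _ kN less.prems(4) cond] less.prems(1,2) unfolding S'_def by auto
    have "\<nu> # ns \<in> Aset es (pats i (k#vs))"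
      unfolding Aset_Cons_pats using nuK ek IH(1,2) unfolding S'_def by auto
    moreover have "set (\<nu> # ns) \<subseteq> S" using IH(2) nu(1) unfolding S'_def by auto
    moreover have "last (i#k#vs) = j" using IH(3) by simp
    ultimately show ?thesis by blast
  qed
qed


definition Tr :: "nat \<Rightarrow> (nat \<times> nat) list \<Rightarrow> nat \<Rightarrow> (nat list \<times> nat list) set" where
  "Tr N es i = {(vs,ns). set vs \<subseteq> {..<N} \<and> length vs \<le> length es \<and> ns \<in> Aset es (pats i vs)}"

lemma finite_Tr: "finite (Tr N es i)"
proof -
  have "Tr N es i \<subseteq> {vs. set vs \<subseteq> {..<N} \<and> length vs \<le> length es} \<times>
      (\<Union>vs\<in>{vs. set vs \<subseteq> {..<N} \<and> length vs \<le> length es}. Aset es (pats i vs))"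
    unfolding Tr_def by auto
  moreover have "finite {vs. set vs \<subseteq> {..<N} \<and> length vs \<le> length es}"
    by (rule finite_lists_length_le) simp
  moreover have "finite (\<Union>vs\<in>{vs. set vs \<subseteq> {..<N} \<and> length vs \<le> length es}. Aset es (pats i vs))"
    by (rule finite_UN_I[OF calculation(2) finite_Aset])
  ultimately show ?thesis
    by (meson finite_SigmaI finite_subset)
qed

lemma mono_nonneg_sum:
  assumes "inr N es" "S \<subseteq> {..<length es}"
  shows "0 \<le> (\<Sum>\<sigma>\<in>configs N. monom es S \<sigma>)"
  by (rule char_sum_nonneg[OF chr_monom[OF assms]])

lemma G_bound:
  assumes es: "inr N es" and S: "S \<subseteq> {..<length es}" and ij: "i < N" "j < N"
  shows "(\<Sum>\<sigma>\<in>configs N. monom es S \<sigma> * (\<sigma> i * \<sigma> j))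
     \<le> (\<Sum>\<tau>\<in>{\<tau>\<in>Tr N es i. last (i # fst \<tau>) = j \<and> set (snd \<tau>) \<subseteq> S}.
            (\<Sum>\<sigma>\<in>configs N. monom es (S - set (snd \<tau>)) \<sigma>))"
    (is "?G \<le> (\<Sum>\<tau>\<in>?T. ?F \<tau>)")
proof -
  have finS: "finite S" using S finite_subset by blast
  have finT: "finite ?T" using finite_Tr[of N es i] by (rule rev_finite_subset) blast
  have Fnn: "0 \<le> ?F \<tau>" for \<tau> using S by (intro mono_nonneg_sum[OF es]) auto
  have ch: "chr N (\<lambda>\<sigma>. monom es S \<sigma> * (\<sigma> i * \<sigma> j))"
    by (intro chr_mult chr_monom[OF es S] chr_site ij)
  show ?thesis
  proof (cases "\<forall>\<sigma>\<in>configs N. monom es S \<sigma> * (\<sigma> i * \<sigma> j) = 1")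
    case True
    obtain vs ns where t: "ns \<in> Aset es (pats i vs)" "set ns \<subseteq> S" "last (i#vs) = j"
      using trail_exists[OF es finS S ij True] by blast
    have pr: "set vs \<subseteq> {..<N}" "length vs = length ns"
      using Aset_pats_props[OF es ij(1) t(1)] by auto
    have "(vs, ns) \<in> ?T"
      unfolding Tr_def using t pr Aset_length_le[OF t(1)] by auto
    have all1: "\<forall>\<sigma>\<in>configs N. monom es (S - set ns) \<sigma> = 1"
    proof
      fix \<sigma> assume s: "\<sigma> \<in> configs N"
      have "monom es S \<sigma> = monom es (S - set ns) \<sigma> * monom es (set ns) \<sigma>"
        unfolding monom_def by (rule prod.subset_diff[OF t(2) finS])
      also have "monom es (set ns) \<sigma> = \<sigma> i * \<sigma> j"
        using trail_prod[OF es s ij(1) t(1)] t(3) by simp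
      finally have c: "monom es S \<sigma> * (\<sigma> i * \<sigma> j) = monom es (S - set ns) \<sigma> * ((\<sigma> i * \<sigma> j) * (\<sigma> i * \<sigma> j))"
        by (simp add: mult.assoc)
      have "monom es S \<sigma> * (\<sigma> i * \<sigma> j) = 1" using True s by blast
      with c have "1 = monom es (S - set ns) \<sigma> * ((\<sigma> i * \<sigma> j) * (\<sigma> i * \<sigma> j))" by simp
      also have "(\<sigma> i * \<sigma> j) * (\<sigma> i * \<sigma> j) = 1"
        using spin_sq[OF s ij(1)] spin_sq[OF s ij(2)] by (simp add: mult_ac)
      finally show "monom es (S - set ns) \<sigma> = 1" by simp
    qed
    have "?G = real (card (configs N))" using char_sum[OF ch] True by simp
    also have "\<dots> = ?F (vs, ns)"
      using char_sum[OF chr_monom[OF es], of "S - set ns"] all1 S by auto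
    also have "\<dots> \<le> (\<Sum>\<tau>\<in>?T. ?F \<tau>)"
      by (rule member_le_sum[OF \<open>(vs, ns) \<in> ?T\<close> _ finT]) (rule Fnn)
    finally show ?thesis .
  next
    case False
    then have "?G = 0" by (simp only: char_sum[OF ch] if_not_P[OF False] if_False)
    also have "0 \<le> (\<Sum>\<tau>\<in>?T. ?F \<tau>)" by (intro sum_nonneg Fnn)
    finally show ?thesis .
  qed
qed

lemma shift_bound:
  assumes es: "inr N es" and M: "M \<subseteq> {..<length es}" and t: "0 \<le> t"
  shows "(\<Sum>S\<in>{S\<in>Pow {..<length es}. M \<subseteq> S}. t ^ card S * (\<Sum>\<sigma>\<in>configs N. monom es (S - M) \<sigma>))
     \<le> t ^ card M * Nt N t es (\<lambda>_. 1)"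
proof -
  let ?P = "{S\<in>Pow {..<length es}. M \<subseteq> S}"
  let ?F = "\<lambda>S. (\<Sum>\<sigma>\<in>configs N. monom es S \<sigma>)"
  have finM: "finite M" using M finite_subset by blast
  have "(\<Sum>S\<in>?P. t ^ card S * ?F (S - M)) = (\<Sum>S\<in>?P. t ^ card M * (t ^ card (S - M) * ?F (S - M)))"
  proof (intro sum.cong refl)
    fix S assume "S \<in> ?P"
    then have fS: "finite S" and MS: "M \<subseteq> S" using finite_subset[of S "{..<length es}"] by auto
    then have "card M \<le> card S" by (rule card_mono)
    then have "card S = card M + card (S - M)" using finM MS by (simp add: card_Diff_subset)
    then show "t ^ card S * ?F (S - M) = t ^ card M * (t ^ card (S - M) * ?F (S - M))"
      by (simp add: power_add)
  qed
  also have "\<dots> = t ^ card M * (\<Sum>S\<in>?P. t ^ card (S - M) * ?F (S - M))"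
    by (simp add: sum_distrib_left)
  also have "(\<Sum>S\<in>?P. t ^ card (S - M) * ?F (S - M)) = (\<Sum>S\<in>(\<lambda>S. S - M) ` ?P. t ^ card S * ?F S)"
  proof (rule sum.reindex[symmetric, unfolded comp_def])
    show "inj_on (\<lambda>S. S - M) ?P"
      by (rule inj_onI) auto
  qed
  also have "\<dots> \<le> (\<Sum>S\<in>Pow {..<length es}. t ^ card S * ?F S)"
    by (rule sum_mono2) (auto intro!: mult_nonneg_nonneg mono_nonneg_sum[OF es] zero_le_power t)
  also have "\<dots> = Nt N t es (\<lambda>_. 1)" by (simp add: Nt_expand)
  finally show ?thesis using t by (simp add: mult_left_mono)
qed

lemma corr_bound:
  assumes es: "inr N es" and t: "0 \<le> t" and ij: "i < N" "j < N"
  shows "Nt N t es (\<lambda>\<sigma>. \<sigma> i * \<sigma> j)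
     \<le> (\<Sum>\<tau>\<in>{\<tau>\<in>Tr N es i. last (i # fst \<tau>) = j}. t ^ length (fst \<tau>)) * Nt N t es (\<lambda>_. 1)"
proof -
  let ?K = "{..<length es}"
  let ?T = "{\<tau>\<in>Tr N es i. last (i # fst \<tau>) = j}"
  let ?F = "\<lambda>S. (\<Sum>\<sigma>\<in>configs N. monom es S \<sigma>)"
  have finT: "finite ?T" using finite_Tr[of N es i] by (rule rev_finite_subset) blast
  have "Nt N t es (\<lambda>\<sigma>. \<sigma> i * \<sigma> j) = (\<Sum>S\<in>Pow ?K. t ^ card S * (\<Sum>\<sigma>\<in>configs N. monom es S \<sigma> * (\<sigma> i * \<sigma> j)))"
    by (rule Nt_expand)
  also have "\<dots> \<le> (\<Sum>S\<in>Pow ?K. t ^ card S * (\<Sum>\<tau>\<in>{\<tau>\<in>?T. set (snd \<tau>) \<subseteq> S}. ?F (S - set (snd \<tau>))))"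
  proof (intro sum_mono mult_left_mono zero_le_power t)
    fix S assume "S \<in> Pow ?K"
    then show "(\<Sum>\<sigma>\<in>configs N. monom es S \<sigma> * (\<sigma> i * \<sigma> j)) \<le> (\<Sum>\<tau>\<in>{\<tau>\<in>?T. set (snd \<tau>) \<subseteq> S}. ?F (S - set (snd \<tau>)))"
      using G_bound[OF es _ ij, of S] by (simp add: conj_assoc)
  qed
  also have "\<dots> = (\<Sum>S\<in>Pow ?K. \<Sum>\<tau>\<in>{\<tau>\<in>?T. set (snd \<tau>) \<subseteq> S}. t ^ card S * ?F (S - set (snd \<tau>)))"
    by (simp add: sum_distrib_left)
  also have "\<dots> = (\<Sum>\<tau>\<in>?T. \<Sum>S\<in>{S\<in>Pow ?K. set (snd \<tau>) \<subseteq> S}. t ^ card S * ?F (S - set (snd \<tau>)))"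
    by (rule sum.swap_restrict[OF _ finT]) simp
  also have "\<dots> \<le> (\<Sum>\<tau>\<in>?T. t ^ length (fst \<tau>) * Nt N t es (\<lambda>_. 1))"
  proof (rule sum_mono)
    fix \<tau> assume "\<tau> \<in> ?T"
    then obtain vs ns where tau: "\<tau> = (vs, ns)" "ns \<in> Aset es (pats i vs)" unfolding Tr_def by auto
    have pr: "length vs = length ns" "set ns \<subseteq> ?K"
      using Aset_pats_props[OF es ij(1) tau(2)] by auto
    have "card (set ns) = length vs" using pr tau(2) by (simp add: Aset_def distinct_card)
    then show "(\<Sum>S\<in>{S\<in>Pow ?K. set (snd \<tau>) \<subseteq> S}. t ^ card S * ?F (S - set (snd \<tau>))) \<le> t ^ length (fst \<tau>) * Nt N t es (\<lambda>_. 1)"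
      using shift_bound[OF es pr(2) t] tau(1) by simp
  qed
  also have "\<dots> = (\<Sum>\<tau>\<in>?T. t ^ length (fst \<tau>)) * Nt N t es (\<lambda>_. 1)"
    by (simp add: sum_distrib_right)
  finally show ?thesis .
qed


definition VV :: "nat \<Rightarrow> nat \<Rightarrow> nat list set" where
  "VV N K = {vs. set vs \<subseteq> {..<N} \<and> length vs \<le> K}"

definition Qb :: "nat \<Rightarrow> real \<Rightarrow> (nat \<times> nat) list \<Rightarrow> real" where
  "Qb N t es = (\<Sum>i<N. \<Sum>vs\<in>VV N (length es). t ^ length vs * real (card (Aset es (pats i vs))))"

lemma finite_VV: "finite (VV N K)"
  unfolding VV_def by (rule finite_lists_length_le) simp

lemma Tr_Sigma: "Tr N es i = Sigma (VV N (length es)) (\<lambda>vs. Aset es (pats i vs))"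
  unfolding Tr_def VV_def by auto

lemma row_bound:
  assumes es: "inr N es" and b: "0 \<le> \<beta>" and i: "i < N"
  shows "(\<Sum>j<N. gibbs N \<beta> es (\<lambda>\<sigma>. \<sigma> i * \<sigma> j))
    \<le> (\<Sum>vs\<in>VV N (length es). tanh \<beta> ^ length vs * real (card (Aset es (pats i vs))))"
proof -
  let ?t = "tanh \<beta>"
  have t: "0 \<le> ?t" using b by simp
  let ?f = "\<lambda>\<tau>::nat list \<times> nat list. ?t ^ length (fst \<tau>)"
  have pos: "Nt N ?t es (\<lambda>_. 1) > 0" by (rule Nt_one_pos[OF es])
  have "(\<Sum>j<N. gibbs N \<beta> es (\<lambda>\<sigma>. \<sigma> i * \<sigma> j)) \<le> (\<Sum>j<N. \<Sum>\<tau>\<in>{\<tau>\<in>Tr N es i. last (i # fst \<tau>) = j}. ?f \<tau>)"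
  proof (rule sum_mono)
    fix j assume "j \<in> {..<N}"
    then have j: "j < N" by simp
    show "gibbs N \<beta> es (\<lambda>\<sigma>. \<sigma> i * \<sigma> j) \<le> (\<Sum>\<tau>\<in>{\<tau>\<in>Tr N es i. last (i # fst \<tau>) = j}. ?f \<tau>)"
      unfolding gibbs_Nt[OF es] using corr_bound[OF es t i j] pos
      by (simp add: divide_le_eq)
  qed
  also have "\<dots> = (\<Sum>\<tau>\<in>Tr N es i. \<Sum>j\<in>{j\<in>{..<N}. last (i # fst \<tau>) = j}. ?f \<tau>)"
    by (rule sum.swap_restrict) (simp_all add: finite_Tr)
  also have "\<dots> = (\<Sum>\<tau>\<in>Tr N es i. ?f \<tau>)"
  proof (rule sum.cong[OF refl])
    fix \<tau> assume "\<tau> \<in> Tr N es i"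
    then obtain vs ns where "\<tau> = (vs, ns)" "ns \<in> Aset es (pats i vs)" unfolding Tr_def by auto
    then have "last (i # fst \<tau>) < N" using Aset_pats_props[OF es i] by auto
    then have "{j\<in>{..<N}. last (i # fst \<tau>) = j} = {last (i # fst \<tau>)}" by auto
    then show "(\<Sum>j\<in>{j\<in>{..<N}. last (i # fst \<tau>) = j}. ?f \<tau>) = ?f \<tau>" by simp
  qed
  also have "\<dots> = (\<Sum>vs\<in>VV N (length es). \<Sum>ns\<in>Aset es (pats i vs). ?t ^ length vs)"
    unfolding Tr_Sigma by (subst sum.Sigma) (auto simp: finite_VV finite_Aset split_def)
  also have "\<dots> = (\<Sum>vs\<in>VV N (length es). ?t ^ length vs * real (card (Aset es (pats i vs))))"
    by (simp add: mult.commute)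
  finally show ?thesis .
qed

lemma gibbs_div: "gibbs N \<beta> es (\<lambda>\<sigma>. f \<sigma> / c) = gibbs N \<beta> es f / c"
  using gibbs_cmult[of N \<beta> es "1/c" f] by (simp add: field_simps)

lemma m2_sum:
  assumes "N \<ge> 1"
  shows "gibbs N \<beta> es (\<lambda>\<sigma>. (magnetization N \<sigma>)\<^sup>2)
    = (\<Sum>i<N. \<Sum>j<N. gibbs N \<beta> es (\<lambda>\<sigma>. \<sigma> i * \<sigma> j)) / (real N)\<^sup>2"
proof -
  have "(\<lambda>\<sigma>. (magnetization N \<sigma>)\<^sup>2) = (\<lambda>\<sigma>. \<Sum>i<N. \<Sum>j<N. (1 / (real N)\<^sup>2) * (\<sigma> i * \<sigma> j))"
  proof (rule ext)
    fix \<sigma> :: "nat \<Rightarrow> real"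
    have "(magnetization N \<sigma>)\<^sup>2 = (\<Sum>i<N. \<sigma> i) * (\<Sum>j<N. \<sigma> j) / (real N)\<^sup>2"
      by (simp add: magnetization_def power2_eq_square)
    also have "\<dots> = (\<Sum>i<N. \<Sum>j<N. \<sigma> i * \<sigma> j) / (real N)\<^sup>2"
      by (simp add: sum_product)
    also have "\<dots> = (\<Sum>i<N. \<Sum>j<N. (1 / (real N)\<^sup>2) * (\<sigma> i * \<sigma> j))"
      by (simp add: sum_distrib_left sum_divide_distrib)
    finally show "(magnetization N \<sigma>)\<^sup>2 = (\<Sum>i<N. \<Sum>j<N. (1 / (real N)\<^sup>2) * (\<sigma> i * \<sigma> j))" .
  qed
  then show ?thesis
    by (simp add: gibbs_sum gibbs_div sum_divide_distrib)
qed

lemma gibbs_m2_bound: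
  assumes es: "inr N es" and b: "0 \<le> \<beta>" and N: "N \<ge> 1"
  shows "real N * gibbs N \<beta> es (\<lambda>\<sigma>. (magnetization N \<sigma>)\<^sup>2) \<le> Qb N (tanh \<beta>) es / real N"
proof -
  have "(\<Sum>i<N. \<Sum>j<N. gibbs N \<beta> es (\<lambda>\<sigma>. \<sigma> i * \<sigma> j)) \<le> Qb N (tanh \<beta>) es"
    unfolding Qb_def by (intro sum_mono row_bound[OF es b]) simp
  then show ?thesis using N unfolding m2_sum[OF N]
    by (simp add: power2_eq_square divide_right_mono)
qed


definition idx :: "nat \<Rightarrow> nat \<Rightarrow> nat" where
  "idx k m = (if m < k then m else Suc m)"

definition remg :: "nat \<Rightarrow> 'a list \<Rightarrow> 'a list" where
  "remg k gs = map (\<lambda>m. gs ! idx k m) [0..<length gs - 1]"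

definition fk :: "nat \<Rightarrow> nat list \<Rightarrow> nat list" where
  "fk k ns = map (\<lambda>m. ns ! idx k m - 1) [0..<length ns - 1]"

lemma idx_lt: "k < l \<Longrightarrow> m < l - 1 \<Longrightarrow> idx k m < l"
  by (auto simp: idx_def)

lemma idx_ne: "idx k m \<noteq> k"
  by (auto simp: idx_def)

lemma idx_inj: "idx k a = idx k b \<Longrightarrow> a = b"
  by (auto simp: idx_def split: if_splits)

lemma length_remg[simp]: "length (remg k gs) = length gs - 1"
  by (simp add: remg_def)

lemma nth_remg: "m < length gs - 1 \<Longrightarrow> remg k gs ! m = gs ! idx k m"
  by (simp add: remg_def)

lemma set_remg: "k < length gs \<Longrightarrow> set (remg k gs) \<subseteq> set gs"
  by (auto simp: remg_def intro!: nth_mem idx_lt)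

lemma Cons_nth_pos: "0 < n \<Longrightarrow> (e # es) ! n = es ! (n - 1)"
  by (cases n) auto

lemma inj_on_pred: "0 \<notin> A \<Longrightarrow> inj_on (\<lambda>n::nat. n - 1) A"
proof (rule inj_onI)
  fix a b assume "0 \<notin> A" "a \<in> A" "b \<in> A" "a - 1 = b - 1"
  then have "a \<noteq> 0" "b \<noteq> 0" "a - 1 = b - 1" by (metis, metis, simp)
  then show "a = b" by linarith
qed

lemma card_rec:
  "card (Aset (e#es) gs) \<le> card (Aset es gs) +
     (\<Sum>k<length gs. if e \<in> gs!k then card (Aset es (remg k gs)) else 0)"
proof -
  let ?l = "length gs"
  let ?A = "Aset (e#es) gs"
  define A0 where "A0 = {ns\<in>?A. 0 \<notin> set ns}"
  define Ak where "Ak = (\<lambda>k. {ns\<in>?A. ns!k = 0})"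
  have sub: "?A \<subseteq> A0 \<union> (\<Union>k<?l. Ak k)"
  proof
    fix ns assume ns: "ns \<in> ?A"
    show "ns \<in> A0 \<union> (\<Union>k<?l. Ak k)"
    proof (cases "0 \<in> set ns")
      case True
      then obtain k where "k < length ns" "ns ! k = 0" by (auto simp: in_set_conv_nth)
      then show ?thesis using ns unfolding Ak_def Aset_def by auto
    qed (use ns A0_def in auto)
  qed
  have finA0: "finite A0" unfolding A0_def using finite_Aset by auto
  have finAk: "finite (Ak k)" for k unfolding Ak_def using finite_Aset by auto
  have "card ?A \<le> card (A0 \<union> (\<Union>k<?l. Ak k))"
    by (rule card_mono[OF _ sub]) (simp add: finA0 finAk)
  also have "\<dots> \<le> card A0 + card (\<Union>k<?l. Ak k)" by (rule card_Un_le)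
  also have "card (\<Union>k<?l. Ak k) \<le> (\<Sum>k<?l. card (Ak k))" by (rule card_UN_le) simp
  also have "card A0 \<le> card (Aset es gs)"
  proof (rule card_inj_on_le[of "map (\<lambda>n. n - 1)"])
    show "inj_on (map (\<lambda>n. n - 1)) A0"
    proof (rule inj_onI)
      fix x y assume xy: "x \<in> A0" "y \<in> A0" "map (\<lambda>n. n - 1) x = map (\<lambda>n. n - 1) y"
      have "inj_on (\<lambda>n::nat. n - 1) (set x \<union> set y)"
        using xy(1,2) unfolding A0_def by (intro inj_on_pred) auto
      then show "x = y" using xy(3) map_inj_on by blast
    qed
    show "map (\<lambda>n. n - 1) ` A0 \<subseteq> Aset es gs"
    proof
      fix z assume "z \<in> map (\<lambda>n. n - 1) ` A0"
      then obtain x where x: "x \<in> A0" "z = map (\<lambda>n. n - 1) x" by blast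
      have nz: "x ! k \<noteq> 0" if "k < length x" for k
        using x(1) that unfolding A0_def by (auto simp: in_set_conv_nth)
      have inj: "inj_on (\<lambda>n::nat. n - 1) (set x)"
        using x(1) unfolding A0_def by (intro inj_on_pred) auto
      have "x \<in> ?A" using x(1) unfolding A0_def by auto
      then have xa: "length x = ?l" "distinct x" "\<forall>k<?l. x!k < Suc (length es) \<and> (e#es)!(x!k) \<in> gs!k"
        unfolding Aset_def by auto
      have lt: "x ! k - 1 < length es" if "k < ?l" for k
      proof -
        have "x!k < Suc (length es)" "x!k \<noteq> 0" using xa(3) nz[of k] that xa(1) by auto
        then show ?thesis by arith
      qed
      show "z \<in> Aset es gs"
        unfolding Aset_def using xa nz inj x(2) lt
        by (auto simp: distinct_map Cons_nth_pos)
    qed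
  qed (rule finite_Aset)
  also have "(\<Sum>k<?l. card (Ak k)) \<le> (\<Sum>k<?l. if e \<in> gs!k then card (Aset es (remg k gs)) else 0)"
  proof (rule sum_mono)
    fix k assume "k \<in> {..<?l}"
    then have k: "k < ?l" by simp
    show "card (Ak k) \<le> (if e \<in> gs!k then card (Aset es (remg k gs)) else 0)"
    proof (cases "e \<in> gs!k")
      case False
      then have "Ak k = {}" using k unfolding Ak_def Aset_def by force
      then show ?thesis by simp
    next
      case True
      have props: "length x = ?l \<and> distinct x \<and> x ! k = 0 \<and>
          (\<forall>m<?l. x!m < Suc (length es) \<and> (e#es)!(x!m) \<in> gs!m) \<and>
          (\<forall>m<?l. m \<noteq> k \<longrightarrow> x ! m \<noteq> 0)" if "x \<in> Ak k" for x
      proof -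
        have a: "length x = ?l" "distinct x" "x ! k = 0" "\<forall>m<?l. x!m < Suc (length es) \<and> (e#es)!(x!m) \<in> gs!m"
          using that unfolding Ak_def Aset_def by auto
        have "\<forall>m<?l. m \<noteq> k \<longrightarrow> x ! m \<noteq> 0"
          using a k by (metis nth_eq_iff_index_eq)
        with a show ?thesis by blast
      qed
      have "card (Ak k) \<le> card (Aset es (remg k gs))"
      proof (rule card_inj_on_le[of "fk k"])
        show "inj_on (fk k) (Ak k)"
        proof (rule inj_onI)
          fix x y assume xy: "x \<in> Ak k" "y \<in> Ak k" "fk k x = fk k y"
          note px = props[OF xy(1)] and py = props[OF xy(2)]
          show "x = y"
          proof (rule nth_equalityI)
            show "length x = length y" using px py by simp
            fix m assume m: "m < length x"
            show "x ! m = y ! m"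
            proof (cases "m = k")
              case True then show ?thesis using px py by simp
            next
              case False
              define m' where "m' = (if m < k then m else m - 1)"
              have im: "idx k m' = m" and m'l: "m' < ?l - 1"
                using False m px k unfolding m'_def idx_def by auto
              have "fk k x ! m' = fk k y ! m'" using xy(3) by simp
              then have "x ! m - 1 = y ! m - 1"
                using m'l px py im unfolding fk_def by simp
              moreover have "x ! m \<noteq> 0" "y ! m \<noteq> 0" using px py m False by auto
              ultimately show ?thesis by simp
            qed
          qed
        qed
        show "fk k ` Ak k \<subseteq> Aset es (remg k gs)"
        proof
          fix z assume "z \<in> fk k ` Ak k"
          then obtain x where x: "x \<in> Ak k" "z = fk k x" by blast
          note px = props[OF x(1)]
          have lz: "length z = ?l - 1" using x(2) px by (simp add: fk_def)
          have zn: "z ! m = x ! idx k m - 1" if "m < ?l - 1" for m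
            using that x(2) px by (simp add: fk_def)
          have nz: "x ! idx k m \<noteq> 0" if "m < ?l - 1" for m
            using px idx_lt[OF k that] idx_ne[of k m] by blast
          have dz: "distinct z"
            unfolding distinct_conv_nth
          proof (intro allI impI)
            fix a b assume ab: "a < length z" "b < length z" "a \<noteq> b"
            have "idx k a \<noteq> idx k b" using ab(3) idx_inj by blast
            then have "x ! idx k a \<noteq> x ! idx k b"
              using px idx_lt[OF k] ab lz by (simp add: nth_eq_iff_index_eq)
            moreover have "x ! idx k a \<noteq> 0" "x ! idx k b \<noteq> 0" using nz ab lz by auto
            ultimately have "x ! idx k a - 1 \<noteq> x ! idx k b - 1" by arith
            then show "z ! a \<noteq> z ! b" using zn ab lz by auto
          qed
          show "z \<in> Aset es (remg k gs)"
            unfolding Aset_def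
          proof (intro CollectI conjI allI impI)
            show "length z = length (remg k gs)" using lz by simp
            show "distinct z" by (rule dz)
            fix m assume "m < length (remg k gs)"
            then have m: "m < ?l - 1" by simp
            have il: "idx k m < ?l" by (rule idx_lt[OF k m])
            show "z ! m < length es" using zn[OF m] nz[OF m] px il by auto
            have "(e#es) ! (x ! idx k m) \<in> gs ! idx k m" using px il by blast
            then show "es ! (z ! m) \<in> remg k gs ! m"
              using zn[OF m] nz[OF m] nth_remg[OF m] by (simp add: Cons_nth_pos)
          qed
        qed
      qed (rule finite_Aset)
      then show ?thesis using True by simp
    qed
  qed
  finally show ?thesis by simp
qed


lemma Aset_Nil: "Aset [] gs = (if gs = [] then {[]} else {})"
  unfolding Aset_def by auto

lemma ff_step:
  fixes q :: real
  shows "fact l * real (K choose l) * q ^ l + real l * (fact (l - 1) * real (K choose (l - 1)) * q ^ (l - 1) * q)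
       = fact l * real (Suc K choose l) * q ^ l"
proof (cases l)
  case 0
  then show ?thesis by simp
next
  case (Suc m)
  have "real (Suc m) * fact m = fact (Suc m)" by simp
  then show ?thesis unfolding Suc
    by (simp add: algebra_simps power_Suc)
qed

lemma exp_card:
  fixes p :: "(nat \<times> nat) pmf" and q :: real
  assumes "\<forall>g\<in>set gs. emeasure (measure_pmf p) g \<le> ennreal q" "0 \<le> q"
  shows "(\<integral>\<^sup>+es. of_nat (card (Aset es gs)) \<partial>replicate_pmf K p)
     \<le> ennreal (fact (length gs) * real (K choose length gs) * q ^ length gs)"
  using assms(1)
proof (induction K arbitrary: gs)
  case 0
  then show ?case by (cases gs) (simp_all add: Aset_Nil)
next
  case (Suc K)
  let ?l = "length gs"
  let ?c = "\<lambda>gs'. (\<integral>\<^sup>+es. of_nat (card (Aset es gs')) \<partial>replicate_pmf K p)"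
  have IH0: "?c gs \<le> ennreal (fact ?l * real (K choose ?l) * q ^ ?l)" using Suc.IH Suc.prems by blast
  have IHk: "?c (remg k gs) \<le> ennreal (fact (?l - 1) * real (K choose (?l - 1)) * q ^ (?l - 1))"
    if "k < ?l" for k
    using Suc.IH[of "remg k gs"] Suc.prems set_remg[OF that] by auto
  have E: "emeasure (measure_pmf p) (gs ! k) \<le> ennreal q" if "k < ?l" for k
    using Suc.prems that by auto
  have "(\<integral>\<^sup>+es. of_nat (card (Aset es gs)) \<partial>replicate_pmf (Suc K) p)
      = (\<integral>\<^sup>+e. \<integral>\<^sup>+es. of_nat (card (Aset (e#es) gs)) \<partial>replicate_pmf K p \<partial>p)"
    by simp
  also have "\<dots> \<le> (\<integral>\<^sup>+e. \<integral>\<^sup>+es. (of_nat (card (Aset es gs)) +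
        (\<Sum>k<?l. indicator (gs!k) e * of_nat (card (Aset es (remg k gs))))) \<partial>replicate_pmf K p \<partial>p)"
  proof (intro nn_integral_mono)
    fix e es
    have "of_nat (card (Aset (e#es) gs)) \<le> (of_nat (card (Aset es gs) +
       (\<Sum>k<?l. if e \<in> gs!k then card (Aset es (remg k gs)) else 0)) :: ennreal)"
      using card_rec[of e es gs] by (simp only: of_nat_le_iff)
    also have "\<dots> = of_nat (card (Aset es gs)) + (\<Sum>k<?l. indicator (gs!k) e * of_nat (card (Aset es (remg k gs))))"
      unfolding of_nat_add of_nat_sum by (intro arg_cong2[where f="(+)"] refl sum.cong) (auto simp: indicator_def)
    finally show "of_nat (card (Aset (e#es) gs)) \<le> (of_nat (card (Aset es gs)) +
        (\<Sum>k<?l. indicator (gs!k) e * of_nat (card (Aset es (remg k gs)))) :: ennreal)" .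
  qed
  also have "\<dots> = (\<integral>\<^sup>+e. ?c gs + (\<Sum>k<?l. indicator (gs!k) e * ?c (remg k gs)) \<partial>p)"
    by (simp add: nn_integral_add nn_integral_sum nn_integral_cmult)
  also have "\<dots> = ?c gs + (\<Sum>k<?l. ?c (remg k gs) * emeasure (measure_pmf p) (gs ! k))"
  proof -
    have "(\<integral>\<^sup>+e. ?c gs + (\<Sum>k<?l. indicator (gs!k) e * ?c (remg k gs)) \<partial>p)
        = (\<integral>\<^sup>+e. ?c gs \<partial>p) + (\<integral>\<^sup>+e. (\<Sum>k<?l. ?c (remg k gs) * indicator (gs!k) e) \<partial>p)"
      by (subst nn_integral_add) (auto simp: mult.commute)
    also have "(\<integral>\<^sup>+e. ?c gs \<partial>p) = ?c gs"
      by (simp add: measure_pmf.emeasure_space_1)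
    also have "(\<integral>\<^sup>+e. (\<Sum>k<?l. ?c (remg k gs) * indicator (gs!k) e) \<partial>p)
        = (\<Sum>k<?l. \<integral>\<^sup>+e. ?c (remg k gs) * indicator (gs!k) e \<partial>p)"
      by (rule nn_integral_sum) simp
    also have "\<dots> = (\<Sum>k<?l. ?c (remg k gs) * emeasure (measure_pmf p) (gs ! k))"
      by (intro sum.cong refl nn_integral_cmult_indicator) simp
    finally show ?thesis .
  qed
  also have "\<dots> \<le> ennreal (fact ?l * real (K choose ?l) * q ^ ?l) +
      (\<Sum>k<?l. ennreal (fact (?l - 1) * real (K choose (?l - 1)) * q ^ (?l - 1)) * ennreal q)"
    by (intro add_mono IH0 sum_mono mult_mono IHk E) auto
  also have "\<dots> = ennreal (fact ?l * real (K choose ?l) * q ^ ?l +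
      real ?l * (fact (?l - 1) * real (K choose (?l - 1)) * q ^ (?l - 1) * q))"
    using assms(2) by (simp add: ennreal_mult' ennreal_plus ennreal_of_nat_eq_real_of_nat)
  also have "\<dots> = ennreal (fact ?l * real (Suc K choose ?l) * q ^ ?l)"
    by (simp only: ff_step)
  finally show ?case .
qed


lemma pois_sums:
  fixes r :: real
  assumes r: "0 < r"
  shows "(\<lambda>K. r ^ K / fact K * exp (- r) * (fact l * real (K choose l))) sums (r ^ l)"
proof -
  let ?f = "\<lambda>K. r ^ K / fact K * exp (- r) * (fact l * real (K choose l))"
  have z: "?f i = 0" if "i < l" for i using that by simp
  have sh: "?f (m + l) = (r ^ l * exp (- r)) * (r ^ m / fact m)" for m
  proof -
    have "real (m + l choose l) = fact (m + l) / (fact l * fact m)"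
      by (simp add: binomial_fact)
    then show ?thesis by (simp add: power_add field_simps)
  qed
  have "(\<lambda>m. r ^ m / fact m) sums exp r"
    using exp_converges[of r] by (simp add: divide_inverse_commute)
  then have "(\<lambda>m. (r ^ l * exp (- r)) * (r ^ m / fact m)) sums ((r ^ l * exp (- r)) * exp r)"
    by (rule sums_mult)
  then have "(\<lambda>m. ?f (m + l)) sums (r ^ l)"
    unfolding sh by (simp add: exp_minus field_simps)
  then show ?thesis using sums_zero_iff_shift[of l ?f] z by simp
qed

lemma pois_moment:
  fixes r :: real
  assumes r: "0 < r"
  shows "(\<integral>\<^sup>+K. ennreal (fact l * real (K choose l)) \<partial>poisson_pmf r) = ennreal (r ^ l)"
proof -
  have "(\<integral>\<^sup>+K. ennreal (fact l * real (K choose l)) \<partial>poisson_pmf r)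
      = (\<integral>\<^sup>+K. ennreal (r ^ K / fact K * exp (- r) * (fact l * real (K choose l))) \<partial>count_space UNIV)"
    using r by (simp add: nn_integral_measure_pmf ennreal_mult'[symmetric])
  also have "\<dots> = (\<Sum>K. ennreal (r ^ K / fact K * exp (- r) * (fact l * real (K choose l))))"
    by (rule nn_integral_count_space_nat)
  also have "\<dots> = ennreal (\<Sum>K. r ^ K / fact K * exp (- r) * (fact l * real (K choose l)))"
    using r pois_sums[OF r, of l] by (intro suminf_ennreal2) (auto simp: sums_summable)
  also have "\<dots> = ennreal (r ^ l)" using pois_sums[OF r, of l] by (simp add: sums_iff)
  finally show ?thesis .
qed

lemma set_site_pair: "N \<ge> 1 \<Longrightarrow> set_pmf (site_pair_pmf N) = {..<N} \<times> {..<N}"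
  unfolding site_pair_pmf_def by (subst set_pmf_of_set) (auto simp: lessThan_empty_iff)

lemma rep_support:
  assumes "N \<ge> 1" "es \<in> set_pmf (replicate_pmf K (site_pair_pmf N))"
  shows "length es = K" "inr N es"
  using assms by (auto simp: set_replicate_pmf set_site_pair inr_def)

lemma emeasure_pat:
  assumes N: "N \<ge> 1"
  shows "emeasure (measure_pmf (site_pair_pmf N)) {(a,b),(b,a)} \<le> ennreal (2 / (real N)\<^sup>2)"
proof -
  let ?S = "{..<N} \<times> {..<N}"
  have ne: "?S \<noteq> {}" using N by (auto simp: lessThan_empty_iff)
  have "card (?S \<inter> {(a,b),(b,a)}) \<le> card {(a,b),(b,a)}" by (rule card_mono) auto
  also have "\<dots> \<le> 2" by (rule order_trans[OF card_insert_le_m1]) auto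
  finally have c: "real (card (?S \<inter> {(a,b),(b,a)})) \<le> 2" by simp
  have "emeasure (measure_pmf (site_pair_pmf N)) {(a,b),(b,a)} = ennreal (real (card (?S \<inter> {(a,b),(b,a)})) / (real N)\<^sup>2)"
    unfolding site_pair_pmf_def using ne
    by (subst emeasure_pmf_of_set) (auto simp: power2_eq_square ennreal_of_nat_eq_real_of_nat divide_ennreal)
  also have "\<dots> \<le> ennreal (2 / (real N)\<^sup>2)"
    using c N by (intro ennreal_leI divide_right_mono) auto
  finally show ?thesis .
qed

lemma sum_VV:
  fixes h :: "nat \<Rightarrow> real"
  shows "(\<Sum>vs\<in>VV N K. h (length vs)) = (\<Sum>l\<le>K. real N ^ l * h l)"
proof -
  have "(\<Sum>vs\<in>VV N K. h (length vs)) = (\<Sum>l\<in>{..K}. \<Sum>vs\<in>{vs\<in>VV N K. length vs = l}. h (length vs))"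
    by (rule sum.group[symmetric, OF finite_VV]) (auto simp: VV_def)
  also have "\<dots> = (\<Sum>l\<le>K. real N ^ l * h l)"
  proof (rule sum.cong[OF refl])
    fix l assume "l \<in> {..K}"
    then have e: "{vs\<in>VV N K. length vs = l} = {vs. set vs \<subseteq> {..<N} \<and> length vs = l}"
      unfolding VV_def by auto
    have "(\<Sum>vs\<in>{vs\<in>VV N K. length vs = l}. h (length vs)) = (\<Sum>vs\<in>{vs. set vs \<subseteq> {..<N} \<and> length vs = l}. h l)"
      unfolding e by (intro sum.cong refl) simp
    also have "\<dots> = real N ^ l * h l" by (simp add: card_lists_length_eq)
    finally show "(\<Sum>vs\<in>{vs\<in>VV N K. length vs = l}. h (length vs)) = real N ^ l * h l" .
  qed
  finally show ?thesis .
qed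

lemma exp_Qb:
  assumes N: "N \<ge> 1" and t: "0 \<le> t"
  shows "(\<integral>\<^sup>+es. ennreal (Qb N t es) \<partial>replicate_pmf K (site_pair_pmf N))
     \<le> ennreal (real N * (\<Sum>l\<le>K. fact l * real (K choose l) * (2 * t / real N) ^ l))"
proof -
  let ?p = "replicate_pmf K (site_pair_pmf N)"
  let ?q = "2 / (real N)\<^sup>2"
  let ?Q = "\<lambda>es. (\<Sum>i<N. \<Sum>vs\<in>VV N K. ennreal (t ^ length vs) * of_nat (card (Aset es (pats i vs))))"
  have "(\<integral>\<^sup>+es. ennreal (Qb N t es) \<partial>?p) = (\<integral>\<^sup>+es. ?Q es \<partial>?p)"
  proof (rule nn_integral_cong_AE, unfold AE_measure_pmf_iff, intro ballI)
    fix es assume "es \<in> set_pmf ?p"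
    then have "length es = K" using rep_support[OF N] by blast
    then show "ennreal (Qb N t es) = ?Q es"
      unfolding Qb_def using t
      by (simp add: ennreal_of_nat_eq_real_of_nat ennreal_mult'[symmetric] sum_nonneg)
  qed
  also have "\<dots> = (\<Sum>i<N. \<Sum>vs\<in>VV N K. ennreal (t ^ length vs) * (\<integral>\<^sup>+es. of_nat (card (Aset es (pats i vs))) \<partial>?p))"
    by (simp add: nn_integral_sum nn_integral_cmult)
  also have "\<dots> \<le> (\<Sum>i<N. \<Sum>vs\<in>VV N K. ennreal (t ^ length vs) *
      ennreal (fact (length vs) * real (K choose length vs) * ?q ^ length vs))"
  proof -
    have pat_ok: "\<forall>g\<in>set (pats i vs). emeasure (measure_pmf (site_pair_pmf N)) g \<le> ennreal ?q" for i vs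
      unfolding pats_def using emeasure_pat[OF N] by auto
    have "(\<integral>\<^sup>+es. of_nat (card (Aset es (pats i vs))) \<partial>?p)
       \<le> ennreal (fact (length vs) * real (K choose length vs) * ?q ^ length vs)" for i vs
      using exp_card[OF pat_ok[of i vs], of K] by simp
    then show ?thesis
      by (intro sum_mono mult_left_mono) auto
  qed
  also have "\<dots> = ennreal (\<Sum>i<N. \<Sum>vs\<in>VV N K. t ^ length vs * (fact (length vs) * real (K choose length vs) * ?q ^ length vs))"
  proof -
    let ?b = "\<lambda>vs::nat list. fact (length vs) * real (K choose length vs) * ?q ^ length vs"
    have ab: "ennreal (t ^ length vs) * ennreal (?b vs) = ennreal (t ^ length vs * ?b vs)" for vs
      by (rule ennreal_mult'[symmetric]) (simp add: t)
    have nn: "0 \<le> t ^ length vs * ?b vs" for vs using t by simp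
    show ?thesis
      by (simp only: ab sum_ennreal[OF nn] sum_ennreal[OF sum_nonneg[OF nn]])
  qed
  also have "(\<Sum>i<N. \<Sum>vs\<in>VV N K. t ^ length vs * (fact (length vs) * real (K choose length vs) * ?q ^ length vs))
      = real N * (\<Sum>l\<le>K. real N ^ l * (t ^ l * (fact l * real (K choose l) * ?q ^ l)))"
    by (simp add: sum_VV[where h = "\<lambda>l. t ^ l * (fact l * real (K choose l) * ?q ^ l)"])
  also have "\<dots> = real N * (\<Sum>l\<le>K. fact l * real (K choose l) * (2 * t / real N) ^ l)"
  proof -
    have eq: "real N ^ l * (t ^ l * (fact l * real (K choose l) * ?q ^ l)) = fact l * real (K choose l) * (2 * t / real N) ^ l" for l
    proof -
      have "real N ^ l * t ^ l * ?q ^ l = (2 * t / real N) ^ l"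
      proof -
        have "real N * t * ?q = 2 * t / real N" using N by (simp add: power2_eq_square field_simps)
        then show ?thesis by (metis power_mult_distrib)
      qed
      then show ?thesis by (simp add: mult_ac)
    qed
    show ?thesis by (simp only: eq)
  qed
  finally show ?thesis .
qed


lemma m2_le_one:
  assumes "\<sigma> \<in> configs N"
  shows "(magnetization N \<sigma>)\<^sup>2 \<le> 1"
proof (cases "N = 0")
  case True then show ?thesis by (simp add: magnetization_def)
next
  case False
  have "\<bar>\<Sum>i<N. \<sigma> i\<bar> \<le> (\<Sum>i<N. \<bar>\<sigma> i\<bar>)" by (rule sum_abs)
  also have "\<dots> = real N" using spin_abs[OF assms] by simp
  finally have "\<bar>magnetization N \<sigma>\<bar> \<le> 1" using False
    by (simp add: magnetization_def divide_le_eq_1 abs_divide)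
  then show ?thesis by (simp add: abs_square_le_1)
qed

lemma gm_bounds:
  "0 \<le> gibbs N \<beta> es (\<lambda>\<sigma>. (magnetization N \<sigma>)\<^sup>2)" "gibbs N \<beta> es (\<lambda>\<sigma>. (magnetization N \<sigma>)\<^sup>2) \<le> 1"
  by (intro gibbs_nonneg gibbs_le_one m2_le_one; simp)+

lemma final_bound:
  assumes a: "0 < \<alpha>" and b: "0 \<le> \<beta>" and c: "2 * \<alpha> * tanh \<beta> < 1" and N: "N \<ge> 1"
  shows "real N * Edis \<alpha> N (\<lambda>es. gibbs N \<beta> es (\<lambda>\<sigma>. (magnetization N \<sigma>)\<^sup>2)) \<le> 1 / (1 - 2 * \<alpha> * tanh \<beta>)"
proof -
  let ?t = "tanh \<beta>"
  let ?g = "\<lambda>es. gibbs N \<beta> es (\<lambda>\<sigma>. (magnetization N \<sigma>)\<^sup>2)"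
  let ?x = "2 * ?t / real N"
  let ?r = "\<alpha> * real N"
  have t: "0 \<le> ?t" using b by simp
  have x: "0 \<le> ?x" using t by simp
  have r: "0 < ?r" using a N by simp
  have rx: "?r * ?x = 2 * \<alpha> * ?t" using N by (simp add: field_simps)
  have rx1: "\<bar>?r * ?x\<bar> < 1" using rx c t a by simp
  let ?a = "\<lambda>K l. fact l * real (K choose l) * ?x ^ l"
  have inner: "(\<integral>\<^sup>+es. ennreal (real N * ?g es) \<partial>replicate_pmf K (site_pair_pmf N)) \<le> (\<Sum>l. ennreal (?a K l))" for K
  proof -
    have "(\<integral>\<^sup>+es. ennreal (real N * ?g es) \<partial>replicate_pmf K (site_pair_pmf N))
        \<le> (\<integral>\<^sup>+es. ennreal (1 / real N) * ennreal (Qb N ?t es) \<partial>replicate_pmf K (site_pair_pmf N))"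
    proof (rule nn_integral_mono_AE, unfold AE_measure_pmf_iff, intro ballI)
      fix es assume "es \<in> set_pmf (replicate_pmf K (site_pair_pmf N))"
      then have es: "inr N es" using rep_support[OF N] by blast
      have "real N * ?g es \<le> Qb N ?t es / real N" by (rule gibbs_m2_bound[OF es b N])
      then have "ennreal (real N * ?g es) \<le> ennreal (1 / real N * Qb N ?t es)" by (intro ennreal_leI) simp
      also have "\<dots> = ennreal (1 / real N) * ennreal (Qb N ?t es)" by (rule ennreal_mult') simp
      finally show "ennreal (real N * ?g es) \<le> ennreal (1 / real N) * ennreal (Qb N ?t es)" .
    qed
    also have "\<dots> = ennreal (1 / real N) * (\<integral>\<^sup>+es. ennreal (Qb N ?t es) \<partial>replicate_pmf K (site_pair_pmf N))"
      by (rule nn_integral_cmult) simp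
    also have "\<dots> \<le> ennreal (1 / real N) * ennreal (real N * (\<Sum>l\<le>K. ?a K l))"
      by (intro mult_left_mono exp_Qb[OF N t]) simp
    also have "\<dots> = ennreal (\<Sum>l\<le>K. ?a K l)"
      using N by (simp add: ennreal_mult'[symmetric])
    also have "\<dots> = (\<Sum>l\<le>K. ennreal (?a K l))"
      using x by (intro sum_ennreal[symmetric]) simp
    also have "\<dots> = (\<Sum>l. ennreal (?a K l))"
      by (rule suminf_finite[symmetric]) (auto simp: binomial_eq_0 not_le)
    finally show ?thesis .
  qed
  have "(\<integral>\<^sup>+es. ennreal (real N * ?g es) \<partial>disorder \<alpha> N)
      = (\<integral>\<^sup>+K. \<integral>\<^sup>+es. ennreal (real N * ?g es) \<partial>replicate_pmf K (site_pair_pmf N) \<partial>poisson_pmf ?r)"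
    unfolding disorder_def by simp
  also have "\<dots> \<le> (\<integral>\<^sup>+K. (\<Sum>l. ennreal (?a K l)) \<partial>poisson_pmf ?r)"
    by (intro nn_integral_mono inner)
  also have "\<dots> = (\<Sum>l. \<integral>\<^sup>+K. ennreal (?a K l) \<partial>poisson_pmf ?r)"
    by (rule nn_integral_suminf) simp
  also have "\<dots> = (\<Sum>l. ennreal ((?r * ?x) ^ l))"
  proof (rule suminf_cong)
    fix l
    have "(\<integral>\<^sup>+K. ennreal (?a K l) \<partial>poisson_pmf ?r) = (\<integral>\<^sup>+K. ennreal (fact l * real (K choose l)) * ennreal (?x ^ l) \<partial>poisson_pmf ?r)"
      using x by (intro nn_integral_cong) (simp add: ennreal_mult)
    also have "\<dots> = (\<integral>\<^sup>+K. ennreal (fact l * real (K choose l)) \<partial>poisson_pmf ?r) * ennreal (?x ^ l)"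
      by (rule nn_integral_multc) simp
    also have "\<dots> = ennreal (?r ^ l) * ennreal (?x ^ l)" by (simp only: pois_moment[OF r])
    also have "\<dots> = ennreal (?r ^ l * ?x ^ l)" using r x by (intro ennreal_mult[symmetric]) auto
    also have "\<dots> = ennreal ((?r * ?x) ^ l)" by (simp only: power_mult_distrib)
    finally show "(\<integral>\<^sup>+K. ennreal (?a K l) \<partial>poisson_pmf ?r) = ennreal ((?r * ?x) ^ l)" .
  qed
  also have "\<dots> = ennreal (\<Sum>l. (?r * ?x) ^ l)"
  proof (rule suminf_ennreal2)
    show "0 \<le> (?r * ?x) ^ l" for l using r x a by (intro zero_le_power mult_nonneg_nonneg) simp_all
    show "summable (\<lambda>l. (?r * ?x) ^ l)" using rx1 by (intro summable_geometric) (simp only: real_norm_def)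
  qed
  also have "\<dots> = ennreal (1 / (1 - 2 * \<alpha> * ?t))"
    using rx1 rx by (simp add: suminf_geometric)
  finally have bnd: "(\<integral>\<^sup>+es. ennreal (real N * ?g es) \<partial>disorder \<alpha> N) \<le> ennreal (1 / (1 - 2 * \<alpha> * ?t))" .
  have "real N * Edis \<alpha> N ?g = measure_pmf.expectation (disorder \<alpha> N) (\<lambda>es. real N * ?g es)"
    unfolding Edis_def by simp
  also have "\<dots> = enn2real (\<integral>\<^sup>+es. ennreal (real N * ?g es) \<partial>disorder \<alpha> N)"
    by (rule integral_eq_nn_integral) (auto simp: gm_bounds)
  also have "\<dots> \<le> 1 / (1 - 2 * \<alpha> * ?t)"
    using c by (intro enn2real_leI bnd) simp
  finally show ?thesis .
qed


lemma gibbs_rep_overlap: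
  "gibbs_rep N \<beta> es n (\<lambda>\<tau>. (overlap N n \<tau>)\<^sup>2)
     = (\<Sum>i<N. \<Sum>j<N. gibbs N \<beta> es (\<lambda>\<sigma>. \<sigma> i * \<sigma> j) ^ n) / (real N)\<^sup>2"
proof -
  let ?P = "PiE {..<n} (\<lambda>_. configs N)"
  let ?w = "\<lambda>\<tau>. (\<Prod>a<n. boltz \<beta> es (\<tau> a))"
  let ?Z = "partition_fn N \<beta> es"
  have ov: "(overlap N n \<tau>)\<^sup>2 = (\<Sum>i<N. \<Sum>j<N. (\<Prod>a<n. \<tau> a i * \<tau> a j)) / (real N)\<^sup>2" for \<tau>
    by (simp add: overlap_def power2_eq_square sum_product prod.distrib)
  have key: "(\<Sum>\<tau>\<in>?P. ?w \<tau> * (\<Prod>a<n. \<tau> a i * \<tau> a j)) = (\<Sum>\<sigma>\<in>configs N. boltz \<beta> es \<sigma> * (\<sigma> i * \<sigma> j)) ^ n" for i j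
  proof -
    have "(\<Sum>\<tau>\<in>?P. ?w \<tau> * (\<Prod>a<n. \<tau> a i * \<tau> a j)) = (\<Sum>\<tau>\<in>?P. \<Prod>a<n. boltz \<beta> es (\<tau> a) * (\<tau> a i * \<tau> a j))"
      by (simp add: prod.distrib)
    also have "\<dots> = (\<Prod>a<n. \<Sum>\<sigma>\<in>configs N. boltz \<beta> es \<sigma> * (\<sigma> i * \<sigma> j))"
      by (rule prod_sum_PiE[symmetric, where f = "\<lambda>a \<sigma>. boltz \<beta> es \<sigma> * (\<sigma> i * \<sigma> j)"]) (simp_all add: finite_configs)
    also have "\<dots> = (\<Sum>\<sigma>\<in>configs N. boltz \<beta> es \<sigma> * (\<sigma> i * \<sigma> j)) ^ n" by simp
    finally show ?thesis .
  qed
  have "gibbs_rep N \<beta> es n (\<lambda>\<tau>. (overlap N n \<tau>)\<^sup>2)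
      = (\<Sum>\<tau>\<in>?P. \<Sum>i<N. \<Sum>j<N. ?w \<tau> * (\<Prod>a<n. \<tau> a i * \<tau> a j)) / (real N)\<^sup>2 / ?Z ^ n"
    unfolding gibbs_rep_def ov by (simp add: sum_distrib_left sum_divide_distrib)
  also have "(\<Sum>\<tau>\<in>?P. \<Sum>i<N. \<Sum>j<N. ?w \<tau> * (\<Prod>a<n. \<tau> a i * \<tau> a j))
      = (\<Sum>i<N. \<Sum>j<N. \<Sum>\<tau>\<in>?P. ?w \<tau> * (\<Prod>a<n. \<tau> a i * \<tau> a j))"
    by (subst sum.swap, subst (2) sum.swap) (rule refl)
  also have "\<dots> = (\<Sum>i<N. \<Sum>j<N. (\<Sum>\<sigma>\<in>configs N. boltz \<beta> es \<sigma> * (\<sigma> i * \<sigma> j)) ^ n)"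
    by (simp only: key)
  finally have e: "gibbs_rep N \<beta> es n (\<lambda>\<tau>. (overlap N n \<tau>)\<^sup>2)
      = (\<Sum>i<N. \<Sum>j<N. (\<Sum>\<sigma>\<in>configs N. boltz \<beta> es \<sigma> * (\<sigma> i * \<sigma> j)) ^ n) / (real N)\<^sup>2 / ?Z ^ n" .
  have t: "(\<Sum>\<sigma>\<in>configs N. boltz \<beta> es \<sigma> * (\<sigma> i * \<sigma> j)) ^ n / ?Z ^ n = gibbs N \<beta> es (\<lambda>\<sigma>. \<sigma> i * \<sigma> j) ^ n" for i j
    unfolding gibbs_def by (simp add: power_divide)
  have "(\<Sum>i<N. \<Sum>j<N. (\<Sum>\<sigma>\<in>configs N. boltz \<beta> es \<sigma> * (\<sigma> i * \<sigma> j)) ^ n) / (real N)\<^sup>2 / ?Z ^ n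
     = (\<Sum>i<N. \<Sum>j<N. (\<Sum>\<sigma>\<in>configs N. boltz \<beta> es \<sigma> * (\<sigma> i * \<sigma> j)) ^ n) / ?Z ^ n / (real N)\<^sup>2"
    by (simp add: divide_divide_eq_left mult.commute)
  also have "(\<Sum>i<N. \<Sum>j<N. (\<Sum>\<sigma>\<in>configs N. boltz \<beta> es \<sigma> * (\<sigma> i * \<sigma> j)) ^ n) / ?Z ^ n
     = (\<Sum>i<N. \<Sum>j<N. (\<Sum>\<sigma>\<in>configs N. boltz \<beta> es \<sigma> * (\<sigma> i * \<sigma> j)) ^ n / ?Z ^ n)"
    by (simp only: sum_divide_distrib)
  also have "\<dots> = (\<Sum>i<N. \<Sum>j<N. gibbs N \<beta> es (\<lambda>\<sigma>. \<sigma> i * \<sigma> j) ^ n)"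
    by (simp only: t)
  finally show ?thesis using e by simp
qed

lemma disorder_support:
  assumes N: "N \<ge> 1" "es \<in> set_pmf (disorder \<alpha> N)"
  shows "inr N es"
proof -
  from assms obtain K where "es \<in> set_pmf (replicate_pmf K (site_pair_pmf N))"
    unfolding disorder_def by auto
  then show ?thesis using rep_support[OF N(1)] by blast
qed

lemma Edis_sites_eq:
  assumes N: "N \<ge> 1"
    and nn: "\<And>es i j. es \<in> set_pmf (disorder \<alpha> N) \<Longrightarrow> i < N \<Longrightarrow> j < N \<Longrightarrow> 0 \<le> F es i j"
  shows "Edis_sites \<alpha> N F = Edis \<alpha> N (\<lambda>es. (\<Sum>i<N. \<Sum>j<N. F es i j) / (real N)\<^sup>2)"
proof -
  let ?S = "{..<N} \<times> {..<N}"
  let ?avg = "\<lambda>es. (\<Sum>i<N. \<Sum>j<N. F es i j) / (real N)\<^sup>2"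
  have ne: "?S \<noteq> {}" using N by (auto simp: lessThan_empty_iff)
  have avgnn: "0 \<le> ?avg es" if "es \<in> set_pmf (disorder \<alpha> N)" for es
    using nn[OF that] by (intro divide_nonneg_nonneg sum_nonneg) auto
  have "Edis_sites \<alpha> N F = enn2real (\<integral>\<^sup>+p. ennreal (case p of (es, (i0, j0)) \<Rightarrow> F es i0 j0) \<partial>pair_pmf (disorder \<alpha> N) (site_pair_pmf N))"
    unfolding Edis_sites_def
    by (rule integral_eq_nn_integral) (auto simp: AE_measure_pmf_iff set_site_pair[OF N] nn)
  also have "(\<integral>\<^sup>+p. ennreal (case p of (es, (i0, j0)) \<Rightarrow> F es i0 j0) \<partial>pair_pmf (disorder \<alpha> N) (site_pair_pmf N))
     = (\<integral>\<^sup>+es. \<integral>\<^sup>+ij. ennreal (F es (fst ij) (snd ij)) \<partial>site_pair_pmf N \<partial>disorder \<alpha> N)"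
    by (simp add: nn_integral_pair_pmf' split_def)
  also have "\<dots> = (\<integral>\<^sup>+es. ennreal (?avg es) \<partial>disorder \<alpha> N)"
  proof (rule nn_integral_cong_AE, unfold AE_measure_pmf_iff, intro ballI)
    fix es assume es: "es \<in> set_pmf (disorder \<alpha> N)"
    have "(\<integral>\<^sup>+ij. ennreal (F es (fst ij) (snd ij)) \<partial>site_pair_pmf N)
        = (\<Sum>ij\<in>?S. ennreal (F es (fst ij) (snd ij))) / of_nat (card ?S)"
      unfolding site_pair_pmf_def using ne by (subst nn_integral_pmf_of_set) auto
    also have "(\<Sum>ij\<in>?S. ennreal (F es (fst ij) (snd ij))) = ennreal (\<Sum>ij\<in>?S. F es (fst ij) (snd ij))"
      using nn[OF es] by (intro sum_ennreal) auto
    also have "(\<Sum>ij\<in>?S. F es (fst ij) (snd ij)) = (\<Sum>i<N. \<Sum>j<N. F es i j)"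
      unfolding sum.cartesian_product by (simp add: split_def)
    also have "of_nat (card ?S) = ennreal ((real N)\<^sup>2)"
      by (simp add: card_cartesian_product power2_eq_square ennreal_of_nat_eq_real_of_nat)
    also have "ennreal (\<Sum>i<N. \<Sum>j<N. F es i j) / ennreal ((real N)\<^sup>2) = ennreal (?avg es)"
      using nn[OF es] N by (intro divide_ennreal sum_nonneg) auto
    finally show "(\<integral>\<^sup>+ij. ennreal (F es (fst ij) (snd ij)) \<partial>site_pair_pmf N) = ennreal (?avg es)" .
  qed
  also have "enn2real \<dots> = Edis \<alpha> N ?avg"
    unfolding Edis_def
    by (rule integral_eq_nn_integral[symmetric]) (auto simp: AE_measure_pmf_iff avgnn)
  finally show ?thesis .
qed

lemma avg_bounds:
  assumes N: "N \<ge> 1" and b: "\<And>i j. i < N \<Longrightarrow> j < N \<Longrightarrow> 0 \<le> F i j \<and> F i j \<le> (1::real)"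
  shows "0 \<le> (\<Sum>i<N. \<Sum>j<N. F i j) / (real N)\<^sup>2 \<and> (\<Sum>i<N. \<Sum>j<N. F i j) / (real N)\<^sup>2 \<le> 1"
proof
  show "0 \<le> (\<Sum>i<N. \<Sum>j<N. F i j) / (real N)\<^sup>2" using b by (intro divide_nonneg_nonneg sum_nonneg) auto
  have "(\<Sum>i<N. \<Sum>j<N. F i j) \<le> (\<Sum>i<N. \<Sum>j<N. (1::real))" using b by (intro sum_mono) auto
  also have "\<dots> = (real N)\<^sup>2" by (simp add: power2_eq_square)
  finally show "(\<Sum>i<N. \<Sum>j<N. F i j) / (real N)\<^sup>2 \<le> 1" using N by simp
qed

lemma corr_bounds:
  assumes "inr N es" "0 \<le> \<beta>" "i < N" "j < N"
  shows "0 \<le> gibbs N \<beta> es (\<lambda>\<sigma>. \<sigma> i * \<sigma> j)" "gibbs N \<beta> es (\<lambda>\<sigma>. \<sigma> i * \<sigma> j) \<le> 1"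
proof -
  show "0 \<le> gibbs N \<beta> es (\<lambda>\<sigma>. \<sigma> i * \<sigma> j)" by (rule gibbs_corr_nonneg[OF assms])
  show "gibbs N \<beta> es (\<lambda>\<sigma>. \<sigma> i * \<sigma> j) \<le> 1"
  proof (rule gibbs_le_one)
    fix \<sigma> assume s: "\<sigma> \<in> configs N"
    have "\<bar>\<sigma> i * \<sigma> j\<bar> = 1" using spin_abs[OF s assms(3)] spin_abs[OF s assms(4)] by (simp add: abs_mult)
    then show "\<sigma> i * \<sigma> j \<le> 1" by simp
  qed
qed


theorem mainTheorem1:
  fixes \<alpha> \<beta> :: real
  assumes "\<alpha> > 0" and "\<beta> \<ge> 0" and "2 * \<alpha> * tanh \<beta> < 1"
  shows "(\<forall>N n::nat. N \<ge> 1 \<and> n \<ge> 2 \<longrightarrow>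
           Edis \<alpha> N (\<lambda>es. gibbs_rep N \<beta> es n (\<lambda>\<tau>. (overlap N n \<tau>)\<^sup>2))
             = Edis_sites \<alpha> N (\<lambda>es i0 j0. (gibbs N \<beta> es (\<lambda>\<sigma>. \<sigma> i0 * \<sigma> j0)) ^ n)
         \<and> Edis_sites \<alpha> N (\<lambda>es i0 j0. (gibbs N \<beta> es (\<lambda>\<sigma>. \<sigma> i0 * \<sigma> j0)) ^ n)
             \<le> Edis_sites \<alpha> N (\<lambda>es i0 j0. gibbs N \<beta> es (\<lambda>\<sigma>. \<sigma> i0 * \<sigma> j0))
         \<and> Edis_sites \<alpha> N (\<lambda>es i0 j0. gibbs N \<beta> es (\<lambda>\<sigma>. \<sigma> i0 * \<sigma> j0))
             = Edis \<alpha> N (\<lambda>es. gibbs N \<beta> es (\<lambda>\<sigma>. (magnetization N \<sigma>)\<^sup>2)))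
       \<and> bdd_above ((\<lambda>N. real N * Edis \<alpha> N (\<lambda>es. gibbs N \<beta> es (\<lambda>\<sigma>. (magnetization N \<sigma>)\<^sup>2))) ` {1..})"
proof (intro conjI allI impI)
  fix N n :: nat
  assume Nn: "N \<ge> 1 \<and> n \<ge> 2"
  then have N: "N \<ge> 1" and n: "n \<ge> 2" by auto
  let ?C = "\<lambda>es i j. gibbs N \<beta> es (\<lambda>\<sigma>. \<sigma> i * \<sigma> j)"
  have cb: "0 \<le> ?C es i j \<and> ?C es i j \<le> 1" if "es \<in> set_pmf (disorder \<alpha> N)" "i < N" "j < N" for es i j
    using corr_bounds[OF disorder_support[OF N that(1)] assms(2) that(2,3)] by simp
  have nnn: "0 \<le> ?C es i j ^ n" if "es \<in> set_pmf (disorder \<alpha> N)" "i < N" "j < N" for es i j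
    using cb[OF that] by simp
  have nn1: "0 \<le> ?C es i j" if "es \<in> set_pmf (disorder \<alpha> N)" "i < N" "j < N" for es i j
    using cb[OF that] by simp
  have S1: "Edis_sites \<alpha> N (\<lambda>es i0 j0. ?C es i0 j0 ^ n) = Edis \<alpha> N (\<lambda>es. (\<Sum>i<N. \<Sum>j<N. ?C es i j ^ n) / (real N)\<^sup>2)"
    by (rule Edis_sites_eq[OF N nnn])
  have S2: "Edis_sites \<alpha> N (\<lambda>es i0 j0. ?C es i0 j0) = Edis \<alpha> N (\<lambda>es. (\<Sum>i<N. \<Sum>j<N. ?C es i j) / (real N)\<^sup>2)"
    by (rule Edis_sites_eq[OF N nn1])
  show "Edis \<alpha> N (\<lambda>es. gibbs_rep N \<beta> es n (\<lambda>\<tau>. (overlap N n \<tau>)\<^sup>2))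
      = Edis_sites \<alpha> N (\<lambda>es i0 j0. (gibbs N \<beta> es (\<lambda>\<sigma>. \<sigma> i0 * \<sigma> j0)) ^ n)"
    unfolding S1 by (simp only: gibbs_rep_overlap)
  show "Edis_sites \<alpha> N (\<lambda>es i0 j0. gibbs N \<beta> es (\<lambda>\<sigma>. \<sigma> i0 * \<sigma> j0))
      = Edis \<alpha> N (\<lambda>es. gibbs N \<beta> es (\<lambda>\<sigma>. (magnetization N \<sigma>)\<^sup>2))"
    unfolding S2 by (simp only: m2_sum[OF N])
  show "Edis_sites \<alpha> N (\<lambda>es i0 j0. (gibbs N \<beta> es (\<lambda>\<sigma>. \<sigma> i0 * \<sigma> j0)) ^ n)
      \<le> Edis_sites \<alpha> N (\<lambda>es i0 j0. gibbs N \<beta> es (\<lambda>\<sigma>. \<sigma> i0 * \<sigma> j0))"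
    unfolding S1 S2 Edis_def
  proof (rule integral_mono_AE')
    let ?f = "\<lambda>es. (\<Sum>i<N. \<Sum>j<N. ?C es i j) / (real N)\<^sup>2"
    have ab: "0 \<le> ?f es \<and> ?f es \<le> 1" if "es \<in> set_pmf (disorder \<alpha> N)" for es
      by (rule avg_bounds[OF N]) (rule cb[OF that])
    show "integrable (measure_pmf (disorder \<alpha> N)) ?f"
      by (rule measure_pmf.integrable_const_bound[where B = 1]) (auto simp: AE_measure_pmf_iff dest: ab)
    show "AE es in measure_pmf (disorder \<alpha> N). 0 \<le> ?f es"
      by (auto simp: AE_measure_pmf_iff dest: ab)
    show "AE es in measure_pmf (disorder \<alpha> N). (\<Sum>i<N. \<Sum>j<N. ?C es i j ^ n) / (real N)\<^sup>2 \<le> ?f es"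
    proof (unfold AE_measure_pmf_iff, intro ballI divide_right_mono sum_mono)
      fix es i j assume es: "es \<in> set_pmf (disorder \<alpha> N)" and "i \<in> {..<N}" "j \<in> {..<N}"
      then have c: "0 \<le> ?C es i j" "?C es i j \<le> 1" using cb by auto
      show "?C es i j ^ n \<le> ?C es i j"
        using power_decreasing[of 1 n "?C es i j"] c n by simp
    qed simp
  qed
next
  show "bdd_above ((\<lambda>N. real N * Edis \<alpha> N (\<lambda>es. gibbs N \<beta> es (\<lambda>\<sigma>. (magnetization N \<sigma>)\<^sup>2))) ` {1..})"
    using final_bound[OF assms] by (intro bdd_aboveI2[where M = "1 / (1 - 2 * \<alpha> * tanh \<beta>)"]) auto
qed


end
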